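(* For every $n\in\mathbb{Z}_{>0}$, $\#\mathrm{E}_n=\sum_{d\mid n}\sigma_1(d)\,\#\mathrm{E}^{\mathrm{p}}_{n/d}$.
   Context: A square-tiled surface with $n$ squares is a connected surface obtained from $n$ unit squares by identifying, via translations, each top side with some bottom side and each right side with some left side (a connected degree-$n$ cover of $\mathbb{C}/(\mathbb{Z}+i\mathbb{Z})$ branched over one point), counted up to translation isomorphism. $\mathcal{H}(2)$: genus $2$ surfaces with a single cone point, of angle $6\pi$. $\mathrm{E}_n$ is the set of square-tiled surfaces with $n$ squares in $\mathcal{H}(2)$; $\mathrm{E}_n^{\mathrm{p}}$ its subset of primitive surfaces, i.e. those whose lattice of periods (subgroup of $\mathbb{Z}^2$ generated by holonomy vectors of saddle connections) is $\mathbb{Z}^2$. $\sigma_1(d)=\sum_{e\mid d}e$. *)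

theory Defs
  imports Main "HOL-Combinatorics.Permutations"
begin

text \<open>A square-tiled surface with n squares is encoded by a pair (h, v) of permutations
of the squares {0..<n}: h i is the square glued to the right side of square i,
v i is the square glued to the top side of square i.\<close>

definition sts_step :: "nat \<Rightarrow> (nat \<Rightarrow> nat) \<Rightarrow> (nat \<Rightarrow> nat) \<Rightarrow> (nat \<times> nat) set" where
  "sts_step n h v = {(i, j). i < n \<and> (j = h i \<or> j = v i \<or> h j = i \<or> v j = i)}"

definition sts :: "nat \<Rightarrow> ((nat \<Rightarrow> nat) \<times> (nat \<Rightarrow> nat)) set" where
  "sts n = {(h, v). h permutes {..<n} \<and> v permutes {..<n} \<and>
             (\<forall>i<n. \<forall>j<n. (i, j) \<in> (sts_step n h v)\<^sup>*)}"

text \<open>Commutator; its cycles on {0..<n} correspond to the vertices of the surface,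
a cycle of length k giving a cone angle 2 pi k.\<close>
definition commutator :: "(nat \<Rightarrow> nat) \<Rightarrow> (nat \<Rightarrow> nat) \<Rightarrow> nat \<Rightarrow> nat" where
  "commutator h v = inv v \<circ> inv h \<circ> v \<circ> h"

text \<open>Stratum H(2): exactly one vertex has angle 6 pi, all others 2 pi, i.e. the
commutator is a single 3-cycle on {0..<n}.\<close>
definition sts_H2 :: "nat \<Rightarrow> ((nat \<Rightarrow> nat) \<times> (nat \<Rightarrow> nat)) set" where
  "sts_H2 n = {(h, v) \<in> sts n. card {i. i < n \<and> commutator h v i \<noteq> i} = 3}"

text \<open>Translation isomorphism = relabelling of squares.\<close>
definition sts_iso :: "nat \<Rightarrow> (((nat \<Rightarrow> nat) \<times> (nat \<Rightarrow> nat)) \<times> ((nat \<Rightarrow> nat) \<times> (nat \<Rightarrow> nat))) set" where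
  "sts_iso n = {((h, v), (h', v')). \<exists>\<sigma>. \<sigma> permutes {..<n} \<and> h' \<circ> \<sigma> = \<sigma> \<circ> h \<and> v' \<circ> \<sigma> = \<sigma> \<circ> v}"

inductive walk :: "nat \<Rightarrow> (nat \<Rightarrow> nat) \<Rightarrow> (nat \<Rightarrow> nat) \<Rightarrow> nat \<Rightarrow> nat \<Rightarrow> int \<Rightarrow> int \<Rightarrow> bool"
  for n h v where
  refl: "i < n \<Longrightarrow> walk n h v i i 0 0"
| right: "walk n h v i j a b \<Longrightarrow> walk n h v i (h j) (a + 1) b"
| up: "walk n h v i j a b \<Longrightarrow> walk n h v i (v j) a (b + 1)"
| left: "walk n h v i j a b \<Longrightarrow> h k = j \<Longrightarrow> k < n \<Longrightarrow> walk n h v i k (a - 1) b"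
| down: "walk n h v i j a b \<Longrightarrow> v k = j \<Longrightarrow> k < n \<Longrightarrow> walk n h v i k a (b - 1)"

inductive_set gen_subgroup :: "(int \<times> int) set \<Rightarrow> (int \<times> int) set" for S where
  zero: "(0, 0) \<in> gen_subgroup S"
| gen: "s \<in> S \<Longrightarrow> s \<in> gen_subgroup S"
| diff: "(a, b) \<in> gen_subgroup S \<Longrightarrow> (c, d) \<in> gen_subgroup S \<Longrightarrow> (a - c, b - d) \<in> gen_subgroup S"

text \<open>Lattice of periods: holonomies of closed curves (for H(2), with a single cone
point, this is the lattice generated by holonomies of saddle connections).\<close>
definition period_lattice :: "nat \<Rightarrow> (nat \<Rightarrow> nat) \<Rightarrow> (nat \<Rightarrow> nat) \<Rightarrow> (int \<times> int) set" where
  "period_lattice n h v = gen_subgroup {(a, b). \<exists>i<n. walk n h v i i a b}"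

definition primitive :: "nat \<Rightarrow> (nat \<Rightarrow> nat) \<times> (nat \<Rightarrow> nat) \<Rightarrow> bool" where
  "primitive n p = (period_lattice n (fst p) (snd p) = UNIV)"

definition E :: "nat \<Rightarrow> ((nat \<Rightarrow> nat) \<times> (nat \<Rightarrow> nat)) set set" where
  "E n = sts_H2 n // sts_iso n"

definition Ep :: "nat \<Rightarrow> ((nat \<Rightarrow> nat) \<times> (nat \<Rightarrow> nat)) set set" where
  "Ep n = {C \<in> E n. \<forall>p\<in>C. primitive n p}"

definition sigma1 :: "nat \<Rightarrow> nat" where
  "sigma1 d = (\<Sum>e\<in>{e. e dvd d}. e)"

end

theory Submission
  imports Defs "HOL-Combinatorics.Cycles"
begin

lemma perm_lt: "h permutes {..<n} \<Longrightarrow> i < n \<Longrightarrow> h i < n"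
  using permutes_in_image[of h "{..<n}" i] by simp

lemma perm_ge: "h permutes {..<n} \<Longrightarrow> \<not> i < n \<Longrightarrow> h i = i"
  by (simp add: permutes_not_in)

lemma perm_pre_lt: "h permutes {..<n} \<Longrightarrow> h k = j \<Longrightarrow> j < n \<Longrightarrow> k < n"
  using perm_ge by fastforce

lemma gen_subgroup_mono: "S \<subseteq> T \<Longrightarrow> gen_subgroup S \<subseteq> gen_subgroup T"
proof
  fix x assume st: "S \<subseteq> T" and "x \<in> gen_subgroup S"
  show "x \<in> gen_subgroup T" using \<open>x \<in> gen_subgroup S\<close>
    by (induction rule: gen_subgroup.induct) (use st in \<open>auto intro: gen_subgroup.intros\<close>)
qed

locale surf =
  fixes n :: nat and h v :: "nat \<Rightarrow> nat"
  assumes hp: "h permutes {..<n}" and vp: "v permutes {..<n}"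
begin

lemma h_lt: "i < n \<Longrightarrow> h i < n" using hp perm_lt by blast
lemma v_lt: "i < n \<Longrightarrow> v i < n" using vp perm_lt by blast
lemma h_ge: "\<not> i < n \<Longrightarrow> h i = i" using hp perm_ge by blast
lemma v_ge: "\<not> i < n \<Longrightarrow> v i = i" using vp perm_ge by blast
lemma hinv_lt: "i < n \<Longrightarrow> inv h i < n" using permutes_inv[OF hp] perm_lt by blast
lemma vinv_lt: "i < n \<Longrightarrow> inv v i < n" using permutes_inv[OF vp] perm_lt by blast
lemma h_hinv[simp]: "h (inv h x) = x" using hp permutes_inverses(1) by fast
lemma hinv_h[simp]: "inv h (h x) = x" using hp permutes_inverses(2) by fast
lemma v_vinv[simp]: "v (inv v x) = x" using vp permutes_inverses(1) by fast
lemma vinv_v[simp]: "inv v (v x) = x" using vp permutes_inverses(2) by fast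

lemma hpow_lt: "i < n \<Longrightarrow> (h ^^ k) i < n" by (induction k) (auto simp: h_lt)
lemma vpow_lt: "i < n \<Longrightarrow> (v ^^ k) i < n" by (induction k) (auto simp: v_lt)
lemma hipow_lt: "i < n \<Longrightarrow> (inv h ^^ k) i < n" by (induction k) (auto simp: hinv_lt)
lemma vipow_lt: "i < n \<Longrightarrow> (inv v ^^ k) i < n" by (induction k) (auto simp: vinv_lt)

lemma walk_lt: "walk n h v i j a b \<Longrightarrow> i < n \<and> j < n"
  by (induction rule: walk.induct) (auto simp: h_lt v_lt)

lemma walk_trans:
  shows "walk n h v j k c d \<Longrightarrow> walk n h v i j a b \<Longrightarrow> walk n h v i k (a+c) (b+d)"
proof (induction rule: walk.induct)
  case (refl i') then show ?case by simp
next
  case (right i' j' a' b') then show ?case using walk.right[OF right.IH] by (simp add: algebra_simps)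
next
  case (up i' j' a' b') then show ?case using walk.up[OF up.IH] by (simp add: algebra_simps)
next
  case (left i' j' a' b' k') then show ?case using walk.left[OF left.IH, of k'] by (simp add: algebra_simps)
next
  case (down i' j' a' b' k') then show ?case using walk.down[OF down.IH, of k'] by (simp add: algebra_simps)
qed

lemma walk_comp: "walk n h v i j a b \<Longrightarrow> walk n h v j k c d \<Longrightarrow> walk n h v i k (a+c) (b+d)"
  using walk_trans by blast

lemma walk_h: "walk n h v i j a b \<Longrightarrow> walk n h v i (h j) (a+1) b" by (rule walk.right)
lemma walk_v: "walk n h v i j a b \<Longrightarrow> walk n h v i (v j) a (b+1)" by (rule walk.up)
lemma walk_hi: "walk n h v i j a b \<Longrightarrow> walk n h v i (inv h j) (a-1) b"
  using walk.left[of n h v i j a b "inv h j"] walk_lt hinv_lt by auto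
lemma walk_vi: "walk n h v i j a b \<Longrightarrow> walk n h v i (inv v j) a (b-1)"
  using walk.down[of n h v i j a b "inv v j"] walk_lt vinv_lt by auto

lemma walk_hpow: "walk n h v i j a b \<Longrightarrow> walk n h v i ((h ^^ k) j) (a + int k) b"
  by (induction k) (auto dest: walk_h simp: algebra_simps)
lemma walk_vpow: "walk n h v i j a b \<Longrightarrow> walk n h v i ((v ^^ k) j) a (b + int k)"
  by (induction k) (auto dest: walk_v simp: algebra_simps)
lemma walk_hipow: "walk n h v i j a b \<Longrightarrow> walk n h v i ((inv h ^^ k) j) (a - int k) b"
  by (induction k) (auto dest: walk_hi simp: algebra_simps)
lemma walk_vipow: "walk n h v i j a b \<Longrightarrow> walk n h v i ((inv v ^^ k) j) a (b - int k)"
  by (induction k) (auto dest: walk_vi simp: algebra_simps)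

lemma walk_refl: "i < n \<Longrightarrow> walk n h v i i 0 0" by (rule walk.refl)

lemma walk_rev: "walk n h v i j a b \<Longrightarrow> walk n h v j i (-a) (-b)"
proof (induction rule: walk.induct)
  case (refl i) then show ?case by (simp add: walk.refl)
next
  case (right i j a b)
  have "walk n h v (h j) j (-1) 0"
    using walk.left[of n h v "h j" "h j" 0 0 j] walk.refl[of "h j" n h v] walk_lt[OF right.IH] h_lt by auto
  from walk_trans[OF right.IH this] show ?case by (simp add: algebra_simps)
next
  case (up i j a b)
  have "walk n h v (v j) j 0 (-1)"
    using walk.down[of n h v "v j" "v j" 0 0 j] walk.refl[of "v j" n h v] walk_lt[OF up.IH] v_lt by auto
  from walk_trans[OF up.IH this] show ?case by (simp add: algebra_simps)
next
  case (left i j a b k)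
  have "walk n h v k j 1 0" using walk.right[OF walk.refl[of k]] left by auto
  from walk_trans[OF left.IH this] show ?case by (simp add: algebra_simps)
next
  case (down i j a b k)
  have "walk n h v k j 0 1" using walk.up[OF walk.refl[of k]] down by auto
  from walk_trans[OF down.IH this] show ?case by (simp add: algebra_simps)
qed

lemma step_walk: "(i, j) \<in> (sts_step n h v)\<^sup>* \<Longrightarrow> i < n \<Longrightarrow> \<exists>a b. walk n h v i j a b"
proof (induction rule: rtrancl_induct)
  case base then show ?case using walk.refl by blast
next
  case (step j k)
  then obtain a b where w: "walk n h v i j a b" by blast
  from step(2) have "k = h j \<or> k = v j \<or> h k = j \<or> v k = j" by (auto simp: sts_step_def)
  then show ?case
  proof (elim disjE)
    assume "k = h j" then show ?thesis using walk.right[OF w] by blast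
  next
    assume "k = v j" then show ?thesis using walk.up[OF w] by blast
  next
    assume "h k = j" then show ?thesis using walk.left[OF w, of k] walk_lt[OF w] perm_pre_lt[OF hp] by blast
  next
    assume "v k = j" then show ?thesis using walk.down[OF w, of k] walk_lt[OF w] perm_pre_lt[OF vp] by blast
  qed
qed

lemma walk_step: "walk n h v i j a b \<Longrightarrow> (i, j) \<in> (sts_step n h v)\<^sup>*"
proof (induction rule: walk.induct)
  case (refl i) then show ?case by simp
next
  case (right i j a b)
  have "(j, h j) \<in> sts_step n h v" using walk_lt[OF right.hyps] by (auto simp: sts_step_def)
  with right.IH show ?case by (meson rtrancl.rtrancl_into_rtrancl)
next
  case (up i j a b)
  have "(j, v j) \<in> sts_step n h v" using walk_lt[OF up.hyps] by (auto simp: sts_step_def)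
  with up.IH show ?case by (meson rtrancl.rtrancl_into_rtrancl)
next
  case (left i j a b k)
  have "(j, k) \<in> sts_step n h v" using walk_lt[OF left.hyps(1)] left by (auto simp: sts_step_def)
  with left.IH show ?case by (meson rtrancl.rtrancl_into_rtrancl)
next
  case (down i j a b k)
  have "(j, k) \<in> sts_step n h v" using walk_lt[OF down.hyps(1)] down by (auto simp: sts_step_def)
  with down.IH show ?case by (meson rtrancl.rtrancl_into_rtrancl)
qed

lemma conn_iff: "(\<forall>i<n. \<forall>j<n. (i, j) \<in> (sts_step n h v)\<^sup>*) \<longleftrightarrow> (\<forall>i<n. \<forall>j<n. \<exists>a b. walk n h v i j a b)"
  using step_walk walk_step by blast

lemma comm_moved: "commutator h v i \<noteq> i \<longleftrightarrow> v (h i) \<noteq> h (v i)"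
proof -
  have "commutator h v i = inv v (inv h (v (h i)))" by (simp add: commutator_def)
  moreover have "inv v (inv h y) = i \<longleftrightarrow> y = h (v i)" for y
    by (metis h_hinv hinv_h v_vinv vinv_v)
  ultimately show ?thesis by simp
qed

end

lemma surf_sts: "(h, v) \<in> sts n \<Longrightarrow> surf n h v" by (auto simp: sts_def surf_def)

definition isoP :: "nat \<Rightarrow> (nat \<Rightarrow> nat) \<Rightarrow> (nat \<Rightarrow> nat) \<Rightarrow> (nat \<Rightarrow> nat) \<Rightarrow> (nat \<Rightarrow> nat) \<Rightarrow> (nat \<Rightarrow> nat) \<Rightarrow> bool" where
  "isoP n \<sigma> h v h' v' \<longleftrightarrow> \<sigma> permutes {..<n} \<and> h' \<circ> \<sigma> = \<sigma> \<circ> h \<and> v' \<circ> \<sigma> = \<sigma> \<circ> v"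

lemma sts_iso_iff: "((h, v), (h', v')) \<in> sts_iso n \<longleftrightarrow> (\<exists>\<sigma>. isoP n \<sigma> h v h' v')"
  by (simp add: sts_iso_def isoP_def)

lemma isoP_sym: "isoP n \<sigma> h v h' v' \<Longrightarrow> isoP n (inv \<sigma>) h' v' h v"
proof -
  assume a: "isoP n \<sigma> h v h' v'"
  then have sp: "\<sigma> permutes {..<n}" by (simp add: isoP_def)
  have p: "\<And>x. h' (\<sigma> x) = \<sigma> (h x)" "\<And>x. v' (\<sigma> x) = \<sigma> (v x)"
    using a by (simp_all add: isoP_def fun_eq_iff)
  have i1: "\<And>x. \<sigma> (inv \<sigma> x) = x" "\<And>x. inv \<sigma> (\<sigma> x) = x" using permutes_inverses[OF sp] by auto
  have "h (inv \<sigma> y) = inv \<sigma> (h' y)" for y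
    using p(1)[of "inv \<sigma> y"] i1 by metis
  moreover have "v (inv \<sigma> y) = inv \<sigma> (v' y)" for y
    using p(2)[of "inv \<sigma> y"] i1 by metis
  ultimately show ?thesis using permutes_inv[OF sp] by (simp add: isoP_def fun_eq_iff)
qed

lemma isoP_trans: "isoP n \<sigma> h v h' v' \<Longrightarrow> isoP n \<tau> h' v' h'' v'' \<Longrightarrow> isoP n (\<tau> \<circ> \<sigma>) h v h'' v''"
  unfolding isoP_def
proof (elim conjE, intro conjI)
  assume a: "\<sigma> permutes {..<n}" "h' \<circ> \<sigma> = \<sigma> \<circ> h" "v' \<circ> \<sigma> = \<sigma> \<circ> v"
    "\<tau> permutes {..<n}" "h'' \<circ> \<tau> = \<tau> \<circ> h'" "v'' \<circ> \<tau> = \<tau> \<circ> v'"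
  then have p: "\<And>x. h' (\<sigma> x) = \<sigma> (h x)" "\<And>x. v' (\<sigma> x) = \<sigma> (v x)"
    "\<And>x. h'' (\<tau> x) = \<tau> (h' x)" "\<And>x. v'' (\<tau> x) = \<tau> (v' x)"
    by (simp_all add: fun_eq_iff)
  show "\<tau> \<circ> \<sigma> permutes {..<n}" using a by (simp add: permutes_compose)
  show "h'' \<circ> (\<tau> \<circ> \<sigma>) = \<tau> \<circ> \<sigma> \<circ> h" using p by (simp add: fun_eq_iff)
  show "v'' \<circ> (\<tau> \<circ> \<sigma>) = \<tau> \<circ> \<sigma> \<circ> v" using p by (simp add: fun_eq_iff)
qed

lemma isoP_refl: "isoP n id h v h v" by (simp add: isoP_def permutes_id)

lemma isoP_app: "isoP n \<sigma> h v h' v' \<Longrightarrow> h' (\<sigma> x) = \<sigma> (h x) \<and> v' (\<sigma> x) = \<sigma> (v x)"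
  unfolding isoP_def by (metis comp_apply)

lemma isoP_walk:
  assumes "isoP n \<sigma> h v h' v'" "walk n h v i j a b"
  shows "walk n h' v' (\<sigma> i) (\<sigma> j) a b"
  using assms(2)
proof (induction rule: walk.induct)
  case (refl i) then show ?case using assms(1) walk.refl by (metis isoP_def lessThan_iff permutes_in_image)
next
  case (right i j a b) then show ?case using isoP_app[OF assms(1)] walk.right by metis
next
  case (up i j a b) then show ?case using isoP_app[OF assms(1)] walk.up by metis
next
  case (left i j a b k) then show ?case using isoP_app[OF assms(1), of k] assms(1) walk.left
    by (metis isoP_def lessThan_iff permutes_in_image)
next
  case (down i j a b k) then show ?case using isoP_app[OF assms(1), of k] assms(1) walk.down
    by (metis isoP_def lessThan_iff permutes_in_image)
qed

lemma isoP_per_sub: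
  assumes "isoP n \<sigma> h v h' v'"
  shows "period_lattice n h v \<subseteq> period_lattice n h' v'"
  unfolding period_lattice_def
proof (rule gen_subgroup_mono, safe)
  fix a b i assume "i < n" "walk n h v i i a b"
  then show "\<exists>i<n. walk n h' v' i i a b"
    using isoP_walk[OF assms] assms by (metis isoP_def lessThan_iff permutes_in_image)
qed

lemma isoP_per: "isoP n \<sigma> h v h' v' \<Longrightarrow> period_lattice n h v = period_lattice n h' v'"
  using isoP_per_sub isoP_sym by blast

lemma isoP_perm:
  assumes "isoP n \<sigma> h v h' v'" "h permutes {..<n}" "v permutes {..<n}"
  shows "h' permutes {..<n}" "v' permutes {..<n}"
proof -
  have sp: "\<sigma> permutes {..<n}" using assms by (simp add: isoP_def)
  have "h' = \<sigma> \<circ> h \<circ> inv \<sigma>" using assms(1) permutes_inverses[OF sp] unfolding isoP_def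
    by (simp add: fun_eq_iff) (metis comp_apply)
  then show "h' permutes {..<n}" by (simp add: assms(2) permutes_compose permutes_inv sp)
  have "v' = \<sigma> \<circ> v \<circ> inv \<sigma>" using assms(1) permutes_inverses[OF sp] unfolding isoP_def
    by (simp add: fun_eq_iff) (metis comp_apply)
  then show "v' permutes {..<n}" by (simp add: assms(3) permutes_compose permutes_inv sp)
qed

lemma isoP_H2: assumes "isoP n \<sigma> h v h' v'" "(h, v) \<in> sts_H2 n"
  shows "(h', v') \<in> sts_H2 n"
proof -
  have hv: "h permutes {..<n}" "v permutes {..<n}" "\<forall>i<n. \<forall>j<n. (i, j) \<in> (sts_step n h v)\<^sup>*"
    and c3: "card {i. i < n \<and> commutator h v i \<noteq> i} = 3"
    using assms(2) by (auto simp: sts_H2_def sts_def)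
  interpret S: surf n h v using hv by (simp add: surf_def)
  have hv': "h' permutes {..<n}" "v' permutes {..<n}" using isoP_perm[OF assms(1) hv(1,2)] by auto
  interpret S': surf n h' v' using hv' by (simp add: surf_def)
  have sp: "\<sigma> permutes {..<n}" using assms by (simp add: isoP_def)
  have conn: "\<forall>i<n. \<forall>j<n. \<exists>a b. walk n h' v' i j a b"
  proof (intro allI impI)
    fix i j assume "i < n" "j < n"
    then have "inv \<sigma> i < n" "inv \<sigma> j < n" using permutes_inv[OF sp] perm_lt by blast+
    then obtain a b where "walk n h v (inv \<sigma> i) (inv \<sigma> j) a b" using hv(3) S.conn_iff by blast
    from isoP_walk[OF assms(1) this] show "\<exists>a b. walk n h' v' i j a b"
      using permutes_inverses(1)[OF sp] by metis
  qed
  have "{i. i < n \<and> commutator h' v' i \<noteq> i} = \<sigma> ` {i. i < n \<and> commutator h v i \<noteq> i}"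
  proof -
    have e: "v' (h' (\<sigma> x)) \<noteq> h' (v' (\<sigma> x)) \<longleftrightarrow> v (h x) \<noteq> h (v x)" for x
      using isoP_app[OF assms(1)] permutes_inj[OF sp] by (metis injD)
    show ?thesis
    proof (rule set_eqI, rule iffI)
      fix y assume "y \<in> {i. i < n \<and> commutator h' v' i \<noteq> i}"
      then have y: "y < n" "v' (h' y) \<noteq> h' (v' y)" using S'.comm_moved by auto
      then have "inv \<sigma> y < n" using permutes_inv[OF sp] perm_lt by blast
      moreover have "v (h (inv \<sigma> y)) \<noteq> h (v (inv \<sigma> y))" using e[of "inv \<sigma> y"] y permutes_inverses(1)[OF sp] by simp
      ultimately have "inv \<sigma> y \<in> {i. i < n \<and> commutator h v i \<noteq> i}"
        using S.comm_moved by auto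
      moreover have "y = \<sigma> (inv \<sigma> y)" using permutes_inverses(1)[OF sp] by simp
      ultimately show "y \<in> \<sigma> ` {i. i < n \<and> commutator h v i \<noteq> i}" by blast
    next
      fix y assume "y \<in> \<sigma> ` {i. i < n \<and> commutator h v i \<noteq> i}"
      then obtain x where "x < n" "commutator h v x \<noteq> x" "y = \<sigma> x" by auto
      then have "y < n" "v' (h' y) \<noteq> h' (v' y)" using e[of x] S.comm_moved perm_lt[OF sp] by auto
      then show "y \<in> {i. i < n \<and> commutator h' v' i \<noteq> i}"
        using S'.comm_moved by auto
    qed
  qed
  then have "card {i. i < n \<and> commutator h' v' i \<noteq> i} = 3"
    using c3 card_image[OF inj_on_subset[OF permutes_inj[OF sp] subset_UNIV]] by metis
  then show ?thesis using hv' conn S'.conn_iff by (auto simp: sts_H2_def sts_def)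
qed

lemma quotI2: "C = r `` {x} \<Longrightarrow> x \<in> A \<Longrightarrow> C \<in> A // r"
  by (simp add: quotientI)

lemma quot_class_img:
  assumes eA: "equiv A R" and eB: "equiv B R'"
    and fB: "\<And>x. x \<in> A \<Longrightarrow> f x \<in> B"
    and resp: "\<And>x y. (x, y) \<in> R \<Longrightarrow> (f x, f y) \<in> R'"
    and x: "x \<in> A"
  shows "R' `` (f ` (R `` {x})) = R' `` {f x}"
proof
  show "R' `` (f ` (R `` {x})) \<subseteq> R' `` {f x}"
  proof
    fix z assume "z \<in> R' `` (f ` (R `` {x}))"
    then obtain y where y: "(x, y) \<in> R" "(f y, z) \<in> R'" by auto
    then have "(f x, f y) \<in> R'" using resp by blast
    with y(2) have "(f x, z) \<in> R'" using eB by (meson equiv_def transD)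
    then show "z \<in> R' `` {f x}" by simp
  qed
  have "(x, x) \<in> R" using eA x by (simp add: equiv_def refl_on_def)
  then show "R' `` {f x} \<subseteq> R' `` (f ` (R `` {x}))" by auto
qed

lemma card_quot_eq:
  assumes eA: "equiv A R" and eB: "equiv B R'"
    and fB: "\<And>x. x \<in> A \<Longrightarrow> f x \<in> B"
    and resp: "\<And>x y. (x, y) \<in> R \<Longrightarrow> (f x, f y) \<in> R'"
    and refl: "\<And>x y. x \<in> A \<Longrightarrow> y \<in> A \<Longrightarrow> (f x, f y) \<in> R' \<Longrightarrow> (x, y) \<in> R"
    and surj: "\<And>y. y \<in> B \<Longrightarrow> \<exists>x\<in>A. (f x, y) \<in> R'"
  shows "card (A // R) = card (B // R')"
proof -
  define g where "g C = R' `` (f ` C)" for C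
  have gx: "g (R `` {x}) = R' `` {f x}" if "x \<in> A" for x
    unfolding g_def apply (rule quot_class_img[OF eA eB]) using fB resp that by auto
  have "bij_betw g (A // R) (B // R')"
  proof (rule bij_betw_imageI)
    show "inj_on g (A // R)"
    proof (rule inj_onI)
      fix C D assume "C \<in> A // R" "D \<in> A // R" "g C = g D"
      then obtain x y where xy: "x \<in> A" "y \<in> A" "C = R `` {x}" "D = R `` {y}"
        by (auto elim!: quotientE)
      then have "R' `` {f x} = R' `` {f y}" using gx \<open>g C = g D\<close> by simp
      then have "(f x, f y) \<in> R'" using eq_equiv_class_iff[OF eB] fB xy by blast
      then have "(x, y) \<in> R" using refl xy by blast
      then show "C = D" using xy equiv_class_eq[OF eA] by simp
    qed
    show "g ` (A // R) = B // R'"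
    proof
      show "g ` (A // R) \<subseteq> B // R'"
      proof
        fix D assume "D \<in> g ` (A // R)"
        then obtain x where x: "x \<in> A" "D = g (R `` {x})" by (auto elim!: quotientE)
        then have "D = R' `` {f x}" using gx by simp
        then show "D \<in> B // R'" using fB[OF x(1)] by (rule quotI2)
      qed
      show "B // R' \<subseteq> g ` (A // R)"
      proof
        fix D assume "D \<in> B // R'"
        then obtain y where y: "y \<in> B" "D = R' `` {y}" by (auto elim!: quotientE)
        then obtain x where x: "x \<in> A" "(f x, y) \<in> R'" using surj by blast
        then have "R' `` {f x} = D" using y equiv_class_eq[OF eB] by simp
        moreover have "R `` {x} \<in> A // R" using x(1) by (rule quotientI)
        ultimately show "D \<in> g ` (A // R)" using gx[OF x(1)] by (metis image_eqI)
      qed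
    qed
  qed
  then show ?thesis by (rule bij_betw_same_card)
qed

lemma quot_restrict:
  assumes eA: "equiv A R"
    and inv: "\<And>x y. (x, y) \<in> R \<Longrightarrow> P x \<longleftrightarrow> P y"
  shows "{C \<in> A // R. \<forall>p\<in>C. P p} = {x \<in> A. P x} // (R \<inter> ({x \<in> A. P x} \<times> {x \<in> A. P x}))"
    and "equiv {x \<in> A. P x} (R \<inter> ({x \<in> A. P x} \<times> {x \<in> A. P x}))"
proof -
  let ?A = "{x \<in> A. P x}"
  let ?R = "R \<inter> (?A \<times> ?A)"
  have RA: "R \<subseteq> A \<times> A" using eA by (simp add: equiv_def)
  have cl: "?R `` {x} = R `` {x}" if "x \<in> ?A" for x
    using that inv RA by auto
  have rx: "x \<in> R `` {x}" if "x \<in> A" for x using eA that by (simp add: equiv_def refl_on_def)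
  show "{C \<in> A // R. \<forall>p\<in>C. P p} = ?A // ?R"
  proof
    show "{C \<in> A // R. \<forall>p\<in>C. P p} \<subseteq> ?A // ?R"
    proof
      fix C assume "C \<in> {C \<in> A // R. \<forall>p\<in>C. P p}"
      then obtain x where "x \<in> A" "C = R `` {x}" "\<forall>p\<in>C. P p" by (auto elim!: quotientE)
      then have x: "x \<in> ?A" "C = R `` {x}" using rx by auto
      then have "C = ?R `` {x}" using cl by simp
      then show "C \<in> ?A // ?R" using x(1) by (rule quotI2)
    qed
    show "?A // ?R \<subseteq> {C \<in> A // R. \<forall>p\<in>C. P p}"
    proof
      fix C assume "C \<in> ?A // ?R"
      then obtain x where x: "x \<in> ?A" "C = ?R `` {x}" by (auto elim!: quotientE)
      then have "C = R `` {x}" using cl by simp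
      moreover have "\<forall>p\<in>C. P p" using x by auto
      moreover have "C \<in> A // R" using \<open>C = R `` {x}\<close> x(1) by (intro quotI2) auto
      ultimately show "C \<in> {C \<in> A // R. \<forall>p\<in>C. P p}" by blast
    qed
  qed
  have s: "sym R" and t: "trans R" and r: "refl_on A R" using eA by (auto simp: equiv_def)
  show "equiv ?A ?R"
  proof (rule equivI)
    show "?R \<subseteq> ?A \<times> ?A" by blast
    show "refl_on ?A ?R" using r by (auto simp: refl_on_def)
    show "sym ?R" using s by (auto simp: sym_def)
    show "trans ?R" using t unfolding trans_def by blast
  qed
qed

definition RH :: "nat \<Rightarrow> (((nat \<Rightarrow> nat) \<times> (nat \<Rightarrow> nat)) \<times> ((nat \<Rightarrow> nat) \<times> (nat \<Rightarrow> nat))) set" where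
  "RH n = sts_iso n \<inter> (sts_H2 n \<times> sts_H2 n)"

lemma RH_iff: "(x, y) \<in> RH n \<longleftrightarrow> x \<in> sts_H2 n \<and> (\<exists>\<sigma>. isoP n \<sigma> (fst x) (snd x) (fst y) (snd y))"
proof -
  obtain h v h' v' where xy: "x = (h, v)" "y = (h', v')" by (cases x, cases y) auto
  show ?thesis unfolding RH_def xy using isoP_H2 by (auto simp: sts_iso_iff)
qed

lemma equiv_RH: "equiv (sts_H2 n) (RH n)"
proof (rule equivI)
  show "RH n \<subseteq> sts_H2 n \<times> sts_H2 n" by (auto simp: RH_def)
  show "refl_on (sts_H2 n) (RH n)"
    unfolding refl_on_def using isoP_refl RH_iff by blast
  show "sym (RH n)"
  proof (rule symI)
    fix x y assume "(x, y) \<in> RH n"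
    then obtain \<sigma> where s: "x \<in> sts_H2 n" "isoP n \<sigma> (fst x) (snd x) (fst y) (snd y)" using RH_iff by blast
    have "y \<in> sts_H2 n" using isoP_H2[OF s(2)] s(1) by simp
    then show "(y, x) \<in> RH n" using isoP_sym[OF s(2)] RH_iff by blast
  qed
  show "trans (RH n)"
  proof (rule transI)
    fix x y z assume "(x, y) \<in> RH n" "(y, z) \<in> RH n"
    then obtain \<sigma> \<tau> where s: "x \<in> sts_H2 n" "isoP n \<sigma> (fst x) (snd x) (fst y) (snd y)"
      "isoP n \<tau> (fst y) (snd y) (fst z) (snd z)" using RH_iff by blast
    show "(x, z) \<in> RH n" using isoP_trans[OF s(2,3)] s(1) RH_iff by blast
  qed
qed

lemma E_RH: "E n = sts_H2 n // RH n"
proof -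
  have "sts_iso n `` {x} = RH n `` {x}" if "x \<in> sts_H2 n" for x
  proof -
    have "y \<in> sts_iso n `` {x} \<longleftrightarrow> y \<in> RH n `` {x}" for y
    proof -
      have "y \<in> sts_iso n `` {x} \<longleftrightarrow> (\<exists>\<sigma>. isoP n \<sigma> (fst x) (snd x) (fst y) (snd y))"
        using sts_iso_iff[of "fst x" "snd x" "fst y" "snd y" n] by simp
      moreover have "y \<in> RH n `` {x} \<longleftrightarrow> (\<exists>\<sigma>. isoP n \<sigma> (fst x) (snd x) (fst y) (snd y))"
        using RH_iff[of x y n] that by simp
      ultimately show ?thesis by simp
    qed
    then show ?thesis by blast
  qed
  then show ?thesis unfolding E_def quotient_def by auto
qed

lemma RH_isoP: "x \<in> sts_H2 n \<Longrightarrow> isoP n \<sigma> (fst x) (snd x) (fst y) (snd y) \<Longrightarrow> (x, y) \<in> RH n"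
  using RH_iff by blast

lemma RH_per: "(x, y) \<in> RH n \<Longrightarrow> period_lattice n (fst x) (snd x) = period_lattice n (fst y) (snd y)"
  using RH_iff isoP_per by blast

lemma perm_of_inj:
  fixes N :: nat
  assumes "\<And>x. x < N \<Longrightarrow> f x < N" "inj_on f {..<N}" "\<And>x. \<not> x < N \<Longrightarrow> f x = x"
  shows "f permutes {..<N}"
proof (rule bij_imp_permutes)
  have "f ` {..<N} = {..<N}" using assms by (intro endo_inj_surj) auto
  then show "bij_betw f {..<N} {..<N}" using assms(2) by (simp add: bij_betw_def)
  show "\<And>x. x \<notin> {..<N} \<Longrightarrow> f x = x" using assms(3) by simp
qed

locale cellp =
  fixes a b c :: nat
  assumes a_pos: "0 < a" and c_pos: "0 < c" and b_lt: "b < a"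
begin

definition enc :: "nat \<Rightarrow> nat \<Rightarrow> nat \<Rightarrow> nat" where "enc k s t = k * (a * c) + s * c + t"
definition ck :: "nat \<Rightarrow> nat" where "ck x = x div (a * c)"
definition cs :: "nat \<Rightarrow> nat" where "cs x = x mod (a * c) div c"
definition ct :: "nat \<Rightarrow> nat" where "ct x = x mod c"

lemma sc_lt: "s < a \<Longrightarrow> t < c \<Longrightarrow> s * c + t < a * c"
proof -
  assume "s < a" "t < c"
  then have "s * c + t < (s + 1) * c" by simp
  also have "\<dots> \<le> a * c" using \<open>s < a\<close> by (intro mult_right_mono) auto
  finally show ?thesis .
qed

lemma enc_ck[simp]: "s < a \<Longrightarrow> t < c \<Longrightarrow> ck (enc k s t) = k"
  unfolding enc_def ck_def using sc_lt a_pos c_pos by (simp add: add.assoc)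

lemma enc_cs[simp]: "s < a \<Longrightarrow> t < c \<Longrightarrow> cs (enc k s t) = s"
proof -
  assume st: "s < a" "t < c"
  have "enc k s t mod (a * c) = s * c + t" unfolding enc_def using sc_lt[OF st]
    by (simp add: add.assoc)
  then show ?thesis unfolding cs_def using st by simp
qed

lemma enc_ct[simp]: "s < a \<Longrightarrow> t < c \<Longrightarrow> ct (enc k s t) = t"
proof -
  assume st: "s < a" "t < c"
  have "enc k s t = (k * a + s) * c + t" unfolding enc_def by (simp add: algebra_simps)
  then show ?thesis unfolding ct_def using st by simp
qed

lemma cs_lt[simp]: "cs x < a"
  unfolding cs_def using a_pos c_pos
  by (metis div_less_iff_less_mult mod_less_divisor mult.commute mult_pos_pos)

lemma ct_lt[simp]: "ct x < c" unfolding ct_def using c_pos by simp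

lemma dec_enc[simp]: "enc (ck x) (cs x) (ct x) = x"
proof -
  have "x mod (a * c) mod c = x mod c" by (metis mod_mod_cancel dvd_triv_right)
  then have "x mod (a * c) = x mod (a * c) div c * c + x mod c" by (metis div_mult_mod_eq)
  then show ?thesis unfolding enc_def ck_def cs_def ct_def
    by (metis add.assoc div_mult_mod_eq)
qed

lemma enc_lt: "k < m \<Longrightarrow> s < a \<Longrightarrow> t < c \<Longrightarrow> enc k s t < m * (a * c)"
proof -
  assume "k < m" "s < a" "t < c"
  then have "enc k s t < k * (a * c) + a * c" unfolding enc_def using sc_lt by simp
  also have "\<dots> = (k + 1) * (a * c)" by simp
  also have "\<dots> \<le> m * (a * c)" using \<open>k < m\<close> by (intro mult_right_mono) auto
  finally show ?thesis .
qed

lemma ck_lt: "x < m * (a * c) \<Longrightarrow> ck x < m"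
  unfolding ck_def by (simp add: div_less_iff_less_mult a_pos c_pos)

lemma enc_eq_iff[simp]: "s < a \<Longrightarrow> t < c \<Longrightarrow> s' < a \<Longrightarrow> t' < c \<Longrightarrow>
  enc k s t = enc k' s' t' \<longleftrightarrow> k = k' \<and> s = s' \<and> t = t'"
  by (metis enc_ck enc_cs enc_ct)

lemma enc_cases:
  assumes "x < m * (a * c)"
  obtains k s t where "x = enc k s t" "k < m" "s < a" "t < c"
  using assms ck_lt dec_enc cs_lt ct_lt by metis

lemma enc_lt_iff: "s < a \<Longrightarrow> t < c \<Longrightarrow> enc k s t < m * (a * c) \<longleftrightarrow> k < m"
  using enc_lt ck_lt enc_ck by metis

definition hF :: "nat \<Rightarrow> (nat \<Rightarrow> nat) \<Rightarrow> nat \<Rightarrow> nat" where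
  "hF m H x = (if x < m * (a * c) then
      (if Suc (cs x) < a then enc (ck x) (Suc (cs x)) (ct x) else enc (H (ck x)) 0 (ct x)) else x)"

definition vF :: "nat \<Rightarrow> (nat \<Rightarrow> nat) \<Rightarrow> (nat \<Rightarrow> nat) \<Rightarrow> nat \<Rightarrow> nat" where
  "vF m H V x = (if x < m * (a * c) then
      (if Suc (ct x) < c then enc (ck x) (cs x) (Suc (ct x))
       else if b \<le> cs x then enc (V (ck x)) (cs x - b) 0
       else enc (V (inv H (ck x))) (cs x + a - b) 0) else x)"

lemma hF_enc: "k < m \<Longrightarrow> s < a \<Longrightarrow> t < c \<Longrightarrow>
  hF m H (enc k s t) = (if Suc s < a then enc k (Suc s) t else enc (H k) 0 t)"
  unfolding hF_def using enc_lt by simp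

lemma vF_enc: "k < m \<Longrightarrow> s < a \<Longrightarrow> t < c \<Longrightarrow>
  vF m H V (enc k s t) = (if Suc t < c then enc k s (Suc t)
       else if b \<le> s then enc (V k) (s - b) 0 else enc (V (inv H k)) (s + a - b) 0)"
  unfolding vF_def using enc_lt by simp

lemma hF_out: "\<not> x < m * (a * c) \<Longrightarrow> hF m H x = x" unfolding hF_def by simp
lemma vF_out: "\<not> x < m * (a * c) \<Longrightarrow> vF m H V x = x" unfolding vF_def by simp

end

locale cellT = cellp a b c for a b c +
  fixes m :: nat and H V :: "nat \<Rightarrow> nat"
  assumes Hp: "H permutes {..<m}" and Vp: "V permutes {..<m}"
begin

abbreviation "N \<equiv> m * (a * c)"
abbreviation "hh \<equiv> hF m H"
abbreviation "vv \<equiv> vF m H V"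

lemma H_lt: "k < m \<Longrightarrow> H k < m" using Hp perm_lt by blast
lemma V_lt: "k < m \<Longrightarrow> V k < m" using Vp perm_lt by blast
lemma Hi_lt: "k < m \<Longrightarrow> inv H k < m" using permutes_inv[OF Hp] perm_lt by blast
lemma Vi_lt: "k < m \<Longrightarrow> inv V k < m" using permutes_inv[OF Vp] perm_lt by blast
lemma H_Hi[simp]: "H (inv H x) = x" using Hp permutes_inverses(1) by fast
lemma Hi_H[simp]: "inv H (H x) = x" using Hp permutes_inverses(2) by fast
lemma V_Vi[simp]: "V (inv V x) = x" using Vp permutes_inverses(1) by fast
lemma Vi_V[simp]: "inv V (V x) = x" using Vp permutes_inverses(2) by fast
lemma H_inj: "H x = H y \<longleftrightarrow> x = y" by (metis Hi_H)
lemma V_inj: "V x = V y \<longleftrightarrow> x = y" by (metis Vi_V)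

lemma hh_enc: "k < m \<Longrightarrow> s < a \<Longrightarrow> t < c \<Longrightarrow>
  hh (enc k s t) = (if Suc s < a then enc k (Suc s) t else enc (H k) 0 t)"
  by (rule hF_enc)
lemma vv_enc: "k < m \<Longrightarrow> s < a \<Longrightarrow> t < c \<Longrightarrow>
  vv (enc k s t) = (if Suc t < c then enc k s (Suc t)
       else if b \<le> s then enc (V k) (s - b) 0 else enc (V (inv H k)) (s + a - b) 0)"
  by (rule vF_enc)

lemma hh_lt: "x < N \<Longrightarrow> hh x < N"
  by (elim enc_cases) (auto simp: hh_enc enc_lt H_lt a_pos c_pos)

lemma vv_lt: "x < N \<Longrightarrow> vv x < N"
proof (elim enc_cases)
  fix k s t assume "x = enc k s t" "k < m" "s < a" "t < c"
  then show "vv x < N" using b_lt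
    by (auto simp: vv_enc enc_lt V_lt Hi_lt a_pos c_pos)
qed

lemma hh_perm: "hh permutes {..<N}"
proof (rule perm_of_inj)
  show "\<And>x. x < N \<Longrightarrow> hh x < N" by (rule hh_lt)
  show "\<And>x. \<not> x < N \<Longrightarrow> hh x = x" by (rule hF_out)
  show "inj_on hh {..<N}"
  proof (rule inj_onI)
    fix x y assume "x \<in> {..<N}" "y \<in> {..<N}" "hh x = hh y"
    then obtain k s t k' s' t' where xy: "x = enc k s t" "k < m" "s < a" "t < c"
      "y = enc k' s' t'" "k' < m" "s' < a" "t' < c"
      by (metis lessThan_iff enc_cases)
    show "x = y" using \<open>hh x = hh y\<close> unfolding xy using xy(2-4,6-8) a_pos
      by (auto simp: hh_enc H_inj split: if_splits)
  qed
qed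

lemma vv_perm: "vv permutes {..<N}"
proof (rule perm_of_inj)
  show "\<And>x. x < N \<Longrightarrow> vv x < N" by (rule vv_lt)
  show "\<And>x. \<not> x < N \<Longrightarrow> vv x = x" by (rule vF_out)
  show "inj_on vv {..<N}"
  proof (rule inj_onI)
    fix x y assume "x \<in> {..<N}" "y \<in> {..<N}" "vv x = vv y"
    then obtain k s t k' s' t' where xy: "x = enc k s t" "k < m" "s < a" "t < c"
      "y = enc k' s' t'" "k' < m" "s' < a" "t' < c"
      by (metis lessThan_iff enc_cases)
    have "V (inv H k) = V (inv H k') \<Longrightarrow> k = k'" by (metis H_Hi V_inj)
    then show "x = y" using \<open>vv x = vv y\<close> unfolding xy using xy(2-4,6-8) a_pos b_lt
      by (auto simp: vv_enc V_inj split: if_splits)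
  qed
qed

sublocale F: surf N hh vv using hh_perm vv_perm by (simp add: surf_def)
sublocale T: surf m H V using Hp Vp by (simp add: surf_def)

end

context cellT begin

lemma hpow_in: "k < m \<Longrightarrow> s + i < a \<Longrightarrow> t < c \<Longrightarrow> (hh ^^ i) (enc k s t) = enc k (s + i) t"
  by (induction i) (auto simp: hh_enc)

lemma vpow_in: "k < m \<Longrightarrow> s < a \<Longrightarrow> t + i < c \<Longrightarrow> (vv ^^ i) (enc k s t) = enc k s (t + i)"
  by (induction i) (auto simp: vv_enc)

lemma corner_lt: "k < m \<Longrightarrow> enc k 0 0 < N" using enc_lt a_pos c_pos by blast

lemma in_cell: "k < m \<Longrightarrow> s < a \<Longrightarrow> t < c \<Longrightarrow> walk N hh vv (enc k 0 0) (enc k s t) (int s) (int t)"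
proof -
  assume k: "k < m" and st: "s < a" "t < c"
  have "walk N hh vv (enc k 0 0) ((vv ^^ t) (enc k 0 0)) 0 (0 + int t)"
    by (rule F.walk_vpow[OF walk.refl[OF corner_lt[OF k]]])
  then have "walk N hh vv (enc k 0 0) (enc k 0 t) 0 (int t)" using vpow_in[of k 0 0 t] k st a_pos by simp
  from F.walk_hpow[OF this, of s] show ?thesis using hpow_in[of k 0 s t] k st by simp
qed

lemma stepH: "k < m \<Longrightarrow> walk N hh vv (enc k 0 0) (enc (H k) 0 0) (int a) 0"
proof -
  assume k: "k < m"
  have a': "a - 1 < a" "\<not> Suc (a - 1) < a" "int (a - 1) + 1 = int a" using a_pos by auto
  have "walk N hh vv (enc k 0 0) (enc k (a - 1) 0) (int (a - 1)) 0" using in_cell[of k "a - 1" 0] k a' c_pos by simp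
  from F.walk_h[OF this] show ?thesis using hh_enc[of k "a - 1" 0] k a' c_pos by simp
qed

lemma stepV: "k < m \<Longrightarrow> walk N hh vv (enc k 0 0) (enc (V k) 0 0) (int b) (int c)"
proof -
  assume k: "k < m"
  have c': "c - 1 < c" "\<not> Suc (c - 1) < c" "int (c - 1) + 1 = int c" using c_pos by auto
  have "walk N hh vv (enc k 0 0) (enc k b (c - 1)) (int b) (int (c - 1))" using in_cell[of k b "c - 1"] k c' b_lt by simp
  from F.walk_v[OF this] show ?thesis using vv_enc[of k b "c - 1"] k c' b_lt by simp
qed

lemma lift_walk:
  "walk m H V k k' \<alpha> \<beta> \<Longrightarrow> walk N hh vv (enc k 0 0) (enc k' 0 0) (int a * \<alpha> + int b * \<beta>) (int c * \<beta>)"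
proof (induction rule: walk.induct)
  case (refl i) then show ?case using walk.refl corner_lt by simp
next
  case (right i j \<alpha> \<beta>)
  have "j < m" using T.walk_lt[OF right.hyps] by simp
  from F.walk_comp[OF right.IH stepH[OF this]] show ?case by (simp add: algebra_simps)
next
  case (up i j \<alpha> \<beta>)
  have "j < m" using T.walk_lt[OF up.hyps] by simp
  from F.walk_comp[OF up.IH stepV[OF this]] show ?case by (simp add: algebra_simps)
next
  case (left i j \<alpha> \<beta> k)
  have "walk N hh vv (enc i 0 0) (enc (H k) 0 0) (int a * \<alpha> + int b * \<beta>) (int c * \<beta>)"
    using left.IH left.hyps(2) by simp
  from F.walk_comp[OF this F.walk_rev[OF stepH[OF left.hyps(3)]]] show ?case
    by (simp add: algebra_simps)
next
  case (down i j \<alpha> \<beta> k)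
  have "walk N hh vv (enc i 0 0) (enc (V k) 0 0) (int a * \<alpha> + int b * \<beta>) (int c * \<beta>)"
    using down.IH down.hyps(2) by simp
  from F.walk_comp[OF this F.walk_rev[OF stepV[OF down.hyps(3)]]] show ?case
    by (simp add: algebra_simps)
qed

definition projP :: "nat \<Rightarrow> nat \<Rightarrow> int \<Rightarrow> int \<Rightarrow> bool" where
  "projP x y \<alpha> \<beta> \<longleftrightarrow> (\<exists>\<alpha>' \<beta>'. walk m H V (ck x) (ck y) \<alpha>' \<beta>' \<and>
     \<alpha> + int (cs x) - int (cs y) = int a * \<alpha>' + int b * \<beta>' \<and> \<beta> + int (ct x) - int (ct y) = int c * \<beta>')"

lemma proj_walk: "walk N hh vv x y \<alpha> \<beta> \<Longrightarrow> projP x y \<alpha> \<beta>"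
proof (induction rule: walk.induct)
  case (refl i)
  then show ?case unfolding projP_def using walk.refl[of "ck i" m H V] ck_lt by (intro exI[of _ 0]) auto
next
  case (right i j \<alpha> \<beta>)
  obtain \<alpha>' \<beta>' where IH: "walk m H V (ck i) (ck j) \<alpha>' \<beta>'"
    "\<alpha> + int (cs i) - int (cs j) = int a * \<alpha>' + int b * \<beta>'" "\<beta> + int (ct i) - int (ct j) = int c * \<beta>'"
    using right.IH unfolding projP_def by blast
  obtain k s t where j: "j = enc k s t" "k < m" "s < a" "t < c"
    using F.walk_lt[OF right.hyps] enc_cases by metis
  have d: "ck j = k" "cs j = s" "ct j = t" using j by auto
  show ?case
  proof (cases "Suc s < a")
    case True
    then have e: "hh j = enc k (Suc s) t" using j by (simp add: hh_enc)
    show ?thesis unfolding projP_def e using IH True j d by (intro exI[of _ \<alpha>'] exI[of _ \<beta>']) auto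
  next
    case False
    then have sa: "int s + 1 = int a" using j by simp
    have e: "hh j = enc (H k) 0 t" using j False by (simp add: hh_enc)
    have "walk m H V (ck i) (H k) (\<alpha>' + 1) \<beta>'" using walk.right[OF IH(1)] d by simp
    moreover have "\<alpha> + 1 + int (cs i) - int (cs (hh j)) = int a * (\<alpha>' + 1) + int b * \<beta>'"
      using IH(2) d sa e a_pos c_pos j(4) by (simp add: algebra_simps)
    moreover have "\<beta> + int (ct i) - int (ct (hh j)) = int c * \<beta>'"
      using IH(3) d e a_pos c_pos j by (simp add: algebra_simps)
    ultimately show ?thesis unfolding projP_def using e H_lt j a_pos c_pos by auto
  qed
next
  case (up i j \<alpha> \<beta>)
  obtain \<alpha>' \<beta>' where IH: "walk m H V (ck i) (ck j) \<alpha>' \<beta>'"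
    "\<alpha> + int (cs i) - int (cs j) = int a * \<alpha>' + int b * \<beta>'" "\<beta> + int (ct i) - int (ct j) = int c * \<beta>'"
    using up.IH unfolding projP_def by blast
  obtain k s t where j: "j = enc k s t" "k < m" "s < a" "t < c"
    using F.walk_lt[OF up.hyps] enc_cases by metis
  have d: "ck j = k" "cs j = s" "ct j = t" using j by auto
  show ?case
  proof (cases "Suc t < c")
    case True
    then have e: "vv j = enc k s (Suc t)" using j by (simp add: vv_enc)
    show ?thesis unfolding projP_def e using IH True j d by (intro exI[of _ \<alpha>'] exI[of _ \<beta>']) auto
  next
    case False
    then have tc: "int t + 1 = int c" using j by simp
    show ?thesis
    proof (cases "b \<le> s")
      case True
      have e: "vv j = enc (V k) (s - b) 0" using j False True by (simp add: vv_enc)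
      have sb: "s - b < a" using j by simp
      have "walk m H V (ck i) (V k) \<alpha>' (\<beta>' + 1)" using walk.up[OF IH(1)] d by simp
      moreover have "\<alpha> + int (cs i) - int (cs (vv j)) = int a * \<alpha>' + int b * (\<beta>' + 1)"
        using IH(2) d e sb c_pos True by (simp add: algebra_simps of_nat_diff)
      moreover have "\<beta> + 1 + int (ct i) - int (ct (vv j)) = int c * (\<beta>' + 1)"
        using IH(3) d e sb c_pos tc by (simp add: algebra_simps)
      ultimately show ?thesis unfolding projP_def using e V_lt j sb c_pos by auto
    next
      case nb: False
      have e: "vv j = enc (V (inv H k)) (s + a - b) 0" using j False nb by (simp add: vv_enc)
      have sb: "s + a - b < a" using nb b_lt by linarith
      have sab: "int (s + a - b) = int s + int a - int b" using b_lt by (simp add: of_nat_diff)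
      have "walk m H V (ck i) (inv H k) (\<alpha>' - 1) \<beta>'" using walk.left[OF IH(1), of "inv H k"] d j Hi_lt by simp
      then have "walk m H V (ck i) (V (inv H k)) (\<alpha>' - 1) (\<beta>' + 1)" using walk.up by blast
      moreover have "\<alpha> + int (cs i) - int (cs (vv j)) = int a * (\<alpha>' - 1) + int b * (\<beta>' + 1)"
        using IH(2) d e sb c_pos nb sab j(4) by (simp add: algebra_simps)
      moreover have "\<beta> + 1 + int (ct i) - int (ct (vv j)) = int c * (\<beta>' + 1)"
        using IH(3) d e sb c_pos tc by (simp add: algebra_simps)
      ultimately show ?thesis unfolding projP_def using e V_lt Hi_lt j sb c_pos by auto
    qed
  qed
next
  case (left i j \<alpha> \<beta> k0)
  obtain \<alpha>' \<beta>' where IH: "walk m H V (ck i) (ck j) \<alpha>' \<beta>'"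
    "\<alpha> + int (cs i) - int (cs j) = int a * \<alpha>' + int b * \<beta>'" "\<beta> + int (ct i) - int (ct j) = int c * \<beta>'"
    using left.IH unfolding projP_def by blast
  obtain k s t where k0: "k0 = enc k s t" "k < m" "s < a" "t < c"
    using left.hyps(3) enc_cases by metis
  have d: "ck k0 = k" "cs k0 = s" "ct k0 = t" using k0 by auto
  show ?case
  proof (cases "Suc s < a")
    case True
    then have "j = enc k (Suc s) t" using left.hyps(2) k0 by (simp add: hh_enc)
    then have "ck j = k" "cs j = Suc s" "ct j = t" using True k0 by auto
    then show ?thesis unfolding projP_def using IH d by (intro exI[of _ \<alpha>'] exI[of _ \<beta>']) (auto simp: algebra_simps)
  next
    case False
    then have sa: "int s + 1 = int a" using k0 by simp
    have "j = enc (H k) 0 t" using left.hyps(2) k0 False by (simp add: hh_enc)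
    then have jj: "ck j = H k" "cs j = 0" "ct j = t" using k0 a_pos by auto
    have "walk m H V (ck i) k (\<alpha>' - 1) \<beta>'" using walk.left[OF IH(1), of k] jj k0 by simp
    moreover have "\<alpha> - 1 + int (cs i) - int (cs k0) = int a * (\<alpha>' - 1) + int b * \<beta>'"
      using IH(2) d jj sa by (simp add: algebra_simps)
    moreover have "\<beta> + int (ct i) - int (ct k0) = int c * \<beta>'"
      using IH(3) d jj by (simp add: algebra_simps)
    ultimately show ?thesis unfolding projP_def using d by auto
  qed
next
  case (down i j \<alpha> \<beta> k0)
  obtain \<alpha>' \<beta>' where IH: "walk m H V (ck i) (ck j) \<alpha>' \<beta>'"
    "\<alpha> + int (cs i) - int (cs j) = int a * \<alpha>' + int b * \<beta>'" "\<beta> + int (ct i) - int (ct j) = int c * \<beta>'"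
    using down.IH unfolding projP_def by blast
  obtain k s t where k0: "k0 = enc k s t" "k < m" "s < a" "t < c"
    using down.hyps(3) enc_cases by metis
  have d: "ck k0 = k" "cs k0 = s" "ct k0 = t" using k0 by auto
  show ?case
  proof (cases "Suc t < c")
    case True
    then have "j = enc k s (Suc t)" using down.hyps(2) k0 by (simp add: vv_enc)
    then have "ck j = k" "cs j = s" "ct j = Suc t" using True k0 by auto
    then show ?thesis unfolding projP_def using IH d by (intro exI[of _ \<alpha>'] exI[of _ \<beta>']) (auto simp: algebra_simps)
  next
    case False
    then have tc: "int t + 1 = int c" using k0 by simp
    show ?thesis
    proof (cases "b \<le> s")
      case True
      have "j = enc (V k) (s - b) 0" using down.hyps(2) k0 False True by (simp add: vv_enc)
      then have jj: "ck j = V k" "cs j = s - b" "ct j = 0" using k0 c_pos by auto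
      have "walk m H V (ck i) k \<alpha>' (\<beta>' - 1)" using walk.down[OF IH(1), of k] jj k0 by simp
      moreover have "\<alpha> + int (cs i) - int (cs k0) = int a * \<alpha>' + int b * (\<beta>' - 1)"
        using IH(2) d jj True by (simp add: algebra_simps of_nat_diff)
      moreover have "\<beta> - 1 + int (ct i) - int (ct k0) = int c * (\<beta>' - 1)"
        using IH(3) d jj tc by (simp add: algebra_simps)
      ultimately show ?thesis unfolding projP_def using d by auto
    next
      case nb: False
      have "j = enc (V (inv H k)) (s + a - b) 0" using down.hyps(2) k0 False nb by (simp add: vv_enc)
      then have jj: "ck j = V (inv H k)" "cs j = s + a - b" "ct j = 0" using k0 c_pos nb by auto
      have sab: "int (s + a - b) = int s + int a - int b" using b_lt by (simp add: of_nat_diff)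
      have "walk m H V (ck i) (inv H k) \<alpha>' (\<beta>' - 1)" using walk.down[OF IH(1), of "inv H k"] jj k0 Hi_lt by simp
      then have "walk m H V (ck i) (H (inv H k)) (\<alpha>' + 1) (\<beta>' - 1)" using walk.right by fastforce
      then have "walk m H V (ck i) k (\<alpha>' + 1) (\<beta>' - 1)" by simp
      moreover have "\<alpha> + int (cs i) - int (cs k0) = int a * (\<alpha>' + 1) + int b * (\<beta>' - 1)"
        using IH(2) d jj nb sab by (simp add: algebra_simps)
      moreover have "\<beta> - 1 + int (ct i) - int (ct k0) = int c * (\<beta>' - 1)"
        using IH(3) d jj tc by (simp add: algebra_simps)
      ultimately show ?thesis unfolding projP_def using d by auto
    qed
  qed
qed

end

context cellT begin

lemma comm_cell:
  assumes k: "k < m" and s: "s < a" and t: "t < c"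
  shows "vv (hh (enc k s t)) \<noteq> hh (vv (enc k s t)) \<longleftrightarrow>
    (t = c - 1 \<and> (if b = 0 then s = a - 1 \<and> V (H k) \<noteq> H (V k) else s = b - 1 \<and> V k \<noteq> H (V (inv H k))))"
proof (cases "Suc t < c")
  case True
  then show ?thesis
  proof (cases "Suc s < a")
    case True
    then show ?thesis using k s t \<open>Suc t < c\<close> by (auto simp: hh_enc vv_enc)
  next
    case False
    then show ?thesis using k s t \<open>Suc t < c\<close> a_pos by (auto simp: hh_enc vv_enc H_lt)
  qed
next
  case False
  then have tc: "t = c - 1" using t by simp
  show ?thesis
  proof (cases "Suc s < a")
    case sa: True
    show ?thesis
    proof (cases "b \<le> s")
      case True
      have "Suc s - b = Suc (s - b)" using True by simp
      then show ?thesis using k s t False sa True by (auto simp: hh_enc vv_enc V_lt)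
    next
      case nb: False
      show ?thesis
      proof (cases "Suc s < b")
        case True
        have e: "Suc s + a - b = Suc (s + a - b)" using nb b_lt by arith
        have "s + a - b < a" "Suc (s + a - b) < a" using True b_lt by arith+
        then show ?thesis using k s t False sa True nb e by (auto simp: hh_enc vv_enc V_lt Hi_lt)
      next
        case sb: False
        then have bb: "Suc s = b" using nb by simp
        have e0: "s + a - b = a - 1" "\<not> Suc (a - 1) < a" "a - 1 < a" using bb a_pos by auto
        have e1: "hh (enc k s t) = enc k b t" using k s t sa bb by (simp add: hh_enc)
        have e2: "vv (enc k b t) = enc (V k) 0 0" using k s t sa bb False b_lt by (simp add: vv_enc)
        have e3: "vv (enc k s t) = enc (V (inv H k)) (a - 1) 0" using k s t sa bb False e0 by (simp add: vv_enc)
        have e4: "hh (enc (V (inv H k)) (a - 1) 0) = enc (H (V (inv H k))) 0 0"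
          using e0 c_pos by (simp add: hh_enc V_lt Hi_lt k)
        have "b \<noteq> 0" "s = b - 1" using bb by auto
        then show ?thesis using e1 e2 e3 e4 tc k c_pos a_pos by (simp add: V_lt H_lt Hi_lt)
      qed
    qed
  next
    case ns: False
    then have sa: "s = a - 1" using s by simp
    show ?thesis
    proof (cases "b = 0")
      case b0: True
      have e0: "\<not> Suc (a - 1) < a" "a - 1 < a" "0 < a" using a_pos b0 by auto
      have e1: "hh (enc k s t) = enc (H k) 0 t" using k s t sa e0 by (simp add: hh_enc)
      have e2: "vv (enc (H k) 0 t) = enc (V (H k)) 0 0" unfolding vv_enc[OF H_lt[OF k] a_pos t]
        using False b0 by simp
      have e3: "vv (enc k s t) = enc (V k) (a - 1) 0" unfolding vv_enc[OF k s t] using False b0 sa by simp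
      have e4: "hh (enc (V k) (a - 1) 0) = enc (H (V k)) 0 0"
        using e0 c_pos by (simp add: hh_enc V_lt k)
      show ?thesis using e1 e2 e3 e4 tc k c_pos a_pos b0 sa by (simp add: V_lt H_lt)
    next
      case nb: False
      have e1: "a - 1 - b < a" "Suc (a - 1 - b) < a" "Suc (a - 1 - b) = a - b" using nb b_lt by auto
      have e2: "\<not> b \<le> 0" "0 + a - b = a - b" using nb by auto
      show ?thesis using k s t False sa c_pos a_pos nb e1 e2 b_lt
        by (auto simp: hh_enc vv_enc V_lt H_lt Hi_lt)
    qed
  qed
qed

definition gmov :: "nat \<Rightarrow> nat" where
  "gmov k = (if b = 0 then enc k (a - 1) (c - 1) else enc (H k) (b - 1) (c - 1))"

lemma moved_eq: "{x. x < N \<and> vv (hh x) \<noteq> hh (vv x)} = gmov ` {k. k < m \<and> V (H k) \<noteq> H (V k)}"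
proof (rule set_eqI, rule iffI)
  fix x assume "x \<in> {x. x < N \<and> vv (hh x) \<noteq> hh (vv x)}"
  then have x: "x < N" "vv (hh x) \<noteq> hh (vv x)" by auto
  then obtain k s t where kst: "x = enc k s t" "k < m" "s < a" "t < c" using enc_cases by metis
  have cc: "t = c - 1 \<and> (if b = 0 then s = a - 1 \<and> V (H k) \<noteq> H (V k) else s = b - 1 \<and> V k \<noteq> H (V (inv H k)))"
    using comm_cell[OF kst(2-4)] x kst by simp
  show "x \<in> gmov ` {k. k < m \<and> V (H k) \<noteq> H (V k)}"
  proof (cases "b = 0")
    case True
    then show ?thesis using cc kst unfolding gmov_def by auto
  next
    case False
    then have "x = gmov (inv H k)" "inv H k < m" "V (H (inv H k)) \<noteq> H (V (inv H k))"
      using cc kst unfolding gmov_def by (auto simp: Hi_lt)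
    then show ?thesis by blast
  qed
next
  fix x assume "x \<in> gmov ` {k. k < m \<and> V (H k) \<noteq> H (V k)}"
  then obtain k where k: "k < m" "V (H k) \<noteq> H (V k)" "x = gmov k" by auto
  show "x \<in> {x. x < N \<and> vv (hh x) \<noteq> hh (vv x)}"
  proof (cases "b = 0")
    case True
    then have "x = enc k (a - 1) (c - 1)" using k unfolding gmov_def by simp
    moreover have "a - 1 < a" "c - 1 < c" using a_pos c_pos by auto
    ultimately show ?thesis using comm_cell[of k "a - 1" "c - 1"] k True enc_lt by auto
  next
    case False
    then have "x = enc (H k) (b - 1) (c - 1)" using k unfolding gmov_def by simp
    moreover have "b - 1 < a" "c - 1 < c" using b_lt c_pos by auto
    ultimately show ?thesis using comm_cell[of "H k" "b - 1" "c - 1"] k False enc_lt H_lt by auto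
  qed
qed

lemma gmov_inj: "inj_on gmov {k. k < m \<and> V (H k) \<noteq> H (V k)}"
proof (rule inj_onI)
  fix x y assume "x \<in> {k. k < m \<and> V (H k) \<noteq> H (V k)}" "y \<in> {k. k < m \<and> V (H k) \<noteq> H (V k)}" "gmov x = gmov y"
  moreover have "a - 1 < a" "c - 1 < c" "b - 1 < a" using a_pos c_pos b_lt by auto
  ultimately show "x = y" unfolding gmov_def by (auto simp: H_inj split: if_splits)
qed

lemma card_moved: "card {i. i < N \<and> commutator hh vv i \<noteq> i} = card {i. i < m \<and> commutator H V i \<noteq> i}"
proof -
  have "{i. i < N \<and> commutator hh vv i \<noteq> i} = {x. x < N \<and> vv (hh x) \<noteq> hh (vv x)}"
    using F.comm_moved by auto
  moreover have "{i. i < m \<and> commutator H V i \<noteq> i} = {k. k < m \<and> V (H k) \<noteq> H (V k)}"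
    using T.comm_moved by auto
  ultimately show ?thesis using moved_eq card_image[OF gmov_inj] by simp
qed

lemma conn_FT: "(\<forall>i<N. \<forall>j<N. \<exists>\<alpha> \<beta>. walk N hh vv i j \<alpha> \<beta>) \<longleftrightarrow> (\<forall>i<m. \<forall>j<m. \<exists>\<alpha> \<beta>. walk m H V i j \<alpha> \<beta>)"
proof
  assume F: "\<forall>i<N. \<forall>j<N. \<exists>\<alpha> \<beta>. walk N hh vv i j \<alpha> \<beta>"
  show "\<forall>i<m. \<forall>j<m. \<exists>\<alpha> \<beta>. walk m H V i j \<alpha> \<beta>"
  proof (intro allI impI)
    fix i j assume "i < m" "j < m"
    then obtain \<alpha> \<beta> where "walk N hh vv (enc i 0 0) (enc j 0 0) \<alpha> \<beta>" using F corner_lt by blast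
    from proj_walk[OF this] show "\<exists>\<alpha> \<beta>. walk m H V i j \<alpha> \<beta>" unfolding projP_def using a_pos c_pos by auto
  qed
next
  assume T: "\<forall>i<m. \<forall>j<m. \<exists>\<alpha> \<beta>. walk m H V i j \<alpha> \<beta>"
  show "\<forall>i<N. \<forall>j<N. \<exists>\<alpha> \<beta>. walk N hh vv i j \<alpha> \<beta>"
  proof (intro allI impI)
    fix x y assume "x < N" "y < N"
    then obtain k s t k' s' t' where xy: "x = enc k s t" "k < m" "s < a" "t < c"
      "y = enc k' s' t'" "k' < m" "s' < a" "t' < c" by (metis enc_cases)
    obtain \<alpha> \<beta> where "walk m H V k k' \<alpha> \<beta>" using T xy by blast
    from lift_walk[OF this] have w2: "\<exists>\<alpha> \<beta>. walk N hh vv (enc k 0 0) (enc k' 0 0) \<alpha> \<beta>" by blast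
    have w1: "walk N hh vv x (enc k 0 0) (- int s) (- int t)" using F.walk_rev[OF in_cell[OF xy(2-4)]] xy by simp
    have w3: "walk N hh vv (enc k' 0 0) y (int s') (int t')" using in_cell[OF xy(6-8)] xy by simp
    show "\<exists>\<alpha> \<beta>. walk N hh vv x y \<alpha> \<beta>" using w1 w2 w3 F.walk_comp by meson
  qed
qed

lemma H2_FT: "(hh, vv) \<in> sts_H2 N \<longleftrightarrow> (H, V) \<in> sts_H2 m"
  unfolding sts_H2_def sts_def using hh_perm vv_perm Hp Vp card_moved conn_FT F.conn_iff T.conn_iff
  by simp

end

definition Mlin :: "nat \<Rightarrow> nat \<Rightarrow> nat \<Rightarrow> int \<times> int \<Rightarrow> int \<times> int" where
  "Mlin a b c p = (int a * fst p + int b * snd p, int c * snd p)"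

lemma gen_subgroup_image:
  assumes add: "\<And>p q. f (fst p - fst q, snd p - snd q) = (fst (f p) - fst (f q), snd (f p) - snd (f q))"
    and z: "f (0, 0) = (0, 0)"
  shows "f ` gen_subgroup S = gen_subgroup (f ` S)"
proof
  show "f ` gen_subgroup S \<subseteq> gen_subgroup (f ` S)"
  proof
    fix y assume "y \<in> f ` gen_subgroup S"
    then obtain x where x: "x \<in> gen_subgroup S" "y = f x" by auto
    have "f x \<in> gen_subgroup (f ` S)" using x(1)
    proof (induction rule: gen_subgroup.induct)
      case zero then show ?case using z gen_subgroup.zero by simp
    next
      case (gen s) then show ?case by (simp add: gen_subgroup.gen)
    next
      case (diff p1 p2 q1 q2)
      obtain u1 u2 w1 w2 where u: "f (p1, p2) = (u1, u2)" "f (q1, q2) = (w1, w2)" by fastforce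
      have "f (p1 - q1, p2 - q2) = (u1 - w1, u2 - w2)" using add[of "(p1, p2)" "(q1, q2)"] u by simp
      then show ?case using gen_subgroup.diff[of u1 u2 "f ` S" w1 w2] diff.IH u by simp
    qed
    then show "y \<in> gen_subgroup (f ` S)" using x by simp
  qed
  show "gen_subgroup (f ` S) \<subseteq> f ` gen_subgroup S"
  proof
    fix y assume "y \<in> gen_subgroup (f ` S)"
    then show "y \<in> f ` gen_subgroup S"
    proof (induction rule: gen_subgroup.induct)
      case zero then show ?case using z gen_subgroup.zero by (metis image_eqI)
    next
      case (gen s) then show ?case using gen_subgroup.gen by blast
    next
      case (diff p1 p2 q1 q2)
      then obtain x1 x2 where "x1 \<in> gen_subgroup S" "f x1 = (p1, p2)" "x2 \<in> gen_subgroup S" "f x2 = (q1, q2)"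
        by auto
      then show ?case using add[of x1 x2] gen_subgroup.diff[of "fst x1" "snd x1" S "fst x2" "snd x2"]
        by (metis fst_conv snd_conv prod.collapse image_eqI)
    qed
  qed
qed

context cellT begin

lemma per_FT: "period_lattice N hh vv = Mlin a b c ` period_lattice m H V"
proof -
  have lin: "Mlin a b c (fst p - fst q, snd p - snd q) = (fst (Mlin a b c p) - fst (Mlin a b c q), snd (Mlin a b c p) - snd (Mlin a b c q))" for p q
    unfolding Mlin_def by (simp add: algebra_simps)
  have z: "Mlin a b c (0, 0) = (0, 0)" unfolding Mlin_def by simp
  let ?SF = "{(\<alpha>, \<beta>). \<exists>i<N. walk N hh vv i i \<alpha> \<beta>}"
  let ?ST = "{(\<alpha>, \<beta>). \<exists>i<m. walk m H V i i \<alpha> \<beta>}"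
  have 1: "?SF \<subseteq> Mlin a b c ` ?ST"
  proof
    fix p assume "p \<in> ?SF"
    then obtain \<alpha> \<beta> i where p: "p = (\<alpha>, \<beta>)" "i < N" "walk N hh vv i i \<alpha> \<beta>" by auto
    from proj_walk[OF p(3)] obtain \<alpha>' \<beta>' where "walk m H V (ck i) (ck i) \<alpha>' \<beta>'"
      "\<alpha> = int a * \<alpha>' + int b * \<beta>'" "\<beta> = int c * \<beta>'" unfolding projP_def by auto
    then show "p \<in> Mlin a b c ` ?ST" unfolding Mlin_def using p ck_lt
      by (intro image_eqI[of _ _ "(\<alpha>', \<beta>')"]) auto
  qed
  have 2: "Mlin a b c ` ?ST \<subseteq> ?SF"
  proof
    fix p assume "p \<in> Mlin a b c ` ?ST"
    then obtain \<alpha> \<beta> i where p: "p = Mlin a b c (\<alpha>, \<beta>)" "i < m" "walk m H V i i \<alpha> \<beta>" by auto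
    from lift_walk[OF p(3)] show "p \<in> ?SF" unfolding Mlin_def p using corner_lt[OF p(2)] by auto
  qed
  have "period_lattice N hh vv = gen_subgroup ?SF" by (simp add: period_lattice_def)
  also have "\<dots> = gen_subgroup (Mlin a b c ` ?ST)" using 1 2 by (simp add: subset_antisym)
  also have "\<dots> = Mlin a b c ` gen_subgroup ?ST" using gen_subgroup_image[OF lin z] by simp
  finally show ?thesis by (simp add: period_lattice_def)
qed

lemma Mlin_inj: "inj (Mlin a b c)"
proof (rule injI)
  fix p q assume "Mlin a b c p = Mlin a b c q"
  then have "int c * snd p = int c * snd q" "int a * fst p + int b * snd p = int a * fst q + int b * snd q"
    unfolding Mlin_def by auto
  then show "p = q" using a_pos c_pos by (simp add: prod_eq_iff)
qed

lemma prim_FT: "primitive m (H, V) \<longleftrightarrow> period_lattice N hh vv = range (Mlin a b c)"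
  unfolding primitive_def per_FT using Mlin_inj by (auto simp: inj_image_eq_iff)

end

context cellp begin

definition inL :: "int \<times> int \<Rightarrow> bool" where
  "inL p \<longleftrightarrow> (\<exists>x y. fst p = int a * x + int b * y \<and> snd p = int c * y)"

lemma inL_range: "range (Mlin a b c) = {p. inL p}"
proof
  show "range (Mlin a b c) \<subseteq> {p. inL p}" unfolding inL_def Mlin_def by fastforce
  show "{p. inL p} \<subseteq> range (Mlin a b c)"
  proof
    fix p assume "p \<in> {p. inL p}"
    then obtain x y where "fst p = int a * x + int b * y" "snd p = int c * y" unfolding inL_def by auto
    then have "p = Mlin a b c (x, y)" unfolding Mlin_def by (simp add: prod_eq_iff)
    then show "p \<in> range (Mlin a b c)" by simp
  qed
qed

lemma inL_Mlin: "inL (Mlin a b c p)" unfolding inL_def Mlin_def by auto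

lemma inL_add: "inL (u1, u2) \<Longrightarrow> inL (w1, w2) \<Longrightarrow> inL (u1 + w1, u2 + w2)"
proof -
  assume "inL (u1, u2)" "inL (w1, w2)"
  then obtain x1 y1 x2 y2 where "u1 = int a * x1 + int b * y1" "u2 = int c * y1"
    "w1 = int a * x2 + int b * y2" "w2 = int c * y2" unfolding inL_def by auto
  then have "u1 + w1 = int a * (x1 + x2) + int b * (y1 + y2)" "u2 + w2 = int c * (y1 + y2)"
    by (simp_all add: algebra_simps)
  then show ?thesis unfolding inL_def by auto
qed

lemma inL_neg: "inL (u1, u2) \<Longrightarrow> inL (- u1, - u2)"
proof -
  assume "inL (u1, u2)"
  then obtain x1 y1 where "u1 = int a * x1 + int b * y1" "u2 = int c * y1" unfolding inL_def by auto
  then have "- u1 = int a * (- x1) + int b * (- y1) \<and> - u2 = int c * (- y1)" by (simp add: algebra_simps)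
  then show ?thesis unfolding inL_def fst_conv snd_conv by blast
qed

lemma inL_diff: "inL (u1, u2) \<Longrightarrow> inL (w1, w2) \<Longrightarrow> inL (u1 - w1, u2 - w2)"
  using inL_add[of u1 u2 "- w1" "- w2"] inL_neg[of w1 w2] by simp

lemma inL_zero: "inL (0, 0)" unfolding inL_def by (rule exI[of _ 0], rule exI[of _ 0]) simp

lemma abs_mult_lt: "\<bar>int c * y\<bar> < int c \<Longrightarrow> y = 0"
proof (rule ccontr)
  assume "\<bar>int c * y\<bar> < int c" "y \<noteq> 0"
  then have "\<bar>y\<bar> \<ge> 1" by simp
  then have "\<bar>int c * y\<bar> \<ge> int c" using c_pos by (simp add: abs_mult mult_le_cancel_left1)
  with \<open>\<bar>int c * y\<bar> < int c\<close> show False by simp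
qed

lemma abs_mult_lt_a: "\<bar>int a * y\<bar> < int a \<Longrightarrow> y = 0"
proof (rule ccontr)
  assume "\<bar>int a * y\<bar> < int a" "y \<noteq> 0"
  then have "\<bar>y\<bar> \<ge> 1" by simp
  then have "\<bar>int a * y\<bar> \<ge> int a" using a_pos by (simp add: abs_mult mult_le_cancel_left1)
  with \<open>\<bar>int a * y\<bar> < int a\<close> show False by simp
qed

lemma box_unique:
  assumes "s < a" "s' < a" "t < c" "t' < c" "inL (int s - int s', int t - int t')"
  shows "s = s' \<and> t = t'"
proof -
  obtain x y where xy: "int s - int s' = int a * x + int b * y" "int t - int t' = int c * y"
    using assms(5) unfolding inL_def by auto
  have "\<bar>int c * y\<bar> < int c" using xy(2) assms(3,4) by linarith
  then have "y = 0" by (rule abs_mult_lt)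
  then have "\<bar>int a * x\<bar> < int a" using xy(1) assms(1,2) by simp
  then have "x = 0" by (rule abs_mult_lt_a)
  then show ?thesis using xy \<open>y = 0\<close> by simp
qed

definition redn :: "int \<times> int \<Rightarrow> nat \<times> nat" where
  "redn p = (nat ((fst p - int b * (snd p div int c)) mod int a), nat (snd p mod int c))"

lemma redn_lt: "fst (redn p) < a" "snd (redn p) < c"
  unfolding redn_def using a_pos c_pos by (auto simp: nat_less_iff)

lemma redn_cong: "inL (fst p - int (fst (redn p)), snd p - int (snd (redn p)))"
proof -
  define y where "y = snd p div int c"
  define x where "x = (fst p - int b * y) div int a"
  have 1: "int (fst (redn p)) = (fst p - int b * y) mod int a" unfolding redn_def y_def using a_pos by simp
  have 2: "int (snd (redn p)) = snd p mod int c" unfolding redn_def using c_pos by simp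
  have z: "fst p - int b * y = int a * ((fst p - int b * y) div int a) + (fst p - int b * y) mod int a"
    by simp
  have "fst p - int (fst (redn p)) = int a * x + int b * y" unfolding 1 x_def using z by linarith
  moreover have "snd p = int c * (snd p div int c) + snd p mod int c" by simp
  then have "snd p - int (snd (redn p)) = int c * y" unfolding 2 y_def by linarith
  ultimately show ?thesis unfolding inL_def by auto
qed

lemma redn_eq_iff: "redn p = redn q \<longleftrightarrow> inL (fst p - fst q, snd p - snd q)"
proof
  assume e: "redn p = redn q"
  have "inL ((fst p - int (fst (redn p))) - (fst q - int (fst (redn q))),
             (snd p - int (snd (redn p))) - (snd q - int (snd (redn q))))"
    using inL_diff[OF redn_cong[of p] redn_cong[of q]] by simp
  then show "inL (fst p - fst q, snd p - snd q)" using e by simp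
next
  assume l: "inL (fst p - fst q, snd p - snd q)"
  have "inL ((fst p - fst q) - (fst p - int (fst (redn p))) + (fst q - int (fst (redn q))),
             (snd p - snd q) - (snd p - int (snd (redn p))) + (snd q - int (snd (redn q))))"
    using inL_add[OF inL_diff[OF l redn_cong[of p]] redn_cong[of q]] by simp
  then have "inL (int (fst (redn p)) - int (fst (redn q)), int (snd (redn p)) - int (snd (redn q)))"
    by (simp add: algebra_simps)
  then show "redn p = redn q" using box_unique redn_lt by (metis prod_eq_iff)
qed

lemma redn_small: "s < a \<Longrightarrow> t < c \<Longrightarrow> redn (int s, int t) = (s, t)"
  unfolding redn_def by simp

lemma redn_L: "inL (fst p, snd p) \<Longrightarrow> redn p = (0, 0)"
  using redn_eq_iff[of p "(0, 0)"] redn_small[of 0 0] a_pos c_pos by simp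

lemma redn_shift: "redn (int (fst (redn p)) + u, int (snd (redn p)) + w) = redn (fst p + u, snd p + w)"
proof -
  have "inL ((int (fst (redn p)) + u) - (fst p + u), (int (snd (redn p)) + w) - (snd p + w))"
    using inL_neg[OF redn_cong[of p]] by (simp add: algebra_simps)
  then show ?thesis using redn_eq_iff by simp
qed

definition mpos :: "nat \<times> nat" where
  "mpos = (if b = 0 then a - 1 else b - 1, c - 1)"

lemma mpos_redn: "mpos = redn (int b - 1, int c - 1)"
proof (cases "b = 0")
  case True
  have ia: "int (a - 1) = int a - 1" "int (c - 1) = int c - 1" using a_pos c_pos by auto
  have e1: "int b - 1 - int (a - 1) = int a * (-1) + int b * 0"
    unfolding ia using True by simp
  have e2: "int c - 1 - int (c - 1) = int c * 0"
    unfolding ia by simp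
  have "inL (int b - 1 - int (a - 1), int c - 1 - int (c - 1))" unfolding inL_def fst_conv snd_conv
    using e1 e2 by blast
  then have "redn (int b - 1, int c - 1) = redn (int (a - 1), int (c - 1))"
    unfolding redn_eq_iff by simp
  then show ?thesis unfolding mpos_def using True a_pos c_pos redn_small[of "a - 1" "c - 1"] by simp
next
  case False
  then have "redn (int b - 1, int c - 1) = redn (int (b - 1), int (c - 1))" using c_pos by (simp add: of_nat_diff)
  then show ?thesis unfolding mpos_def using False b_lt c_pos redn_small[of "b - 1" "c - 1"] by simp
qed

end

context cellT begin

lemma posF_walk: "walk N hh vv x y \<alpha> \<beta> \<Longrightarrow> redn (int (cs x) + \<alpha>, int (ct x) + \<beta>) = (cs y, ct y)"
proof -
  assume "walk N hh vv x y \<alpha> \<beta>"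
  from proj_walk[OF this] obtain \<alpha>' \<beta>' where
    e: "\<alpha> + int (cs x) - int (cs y) = int a * \<alpha>' + int b * \<beta>'" "\<beta> + int (ct x) - int (ct y) = int c * \<beta>'"
    unfolding projP_def by auto
  have "inL ((int (cs x) + \<alpha>) - int (cs y), (int (ct x) + \<beta>) - int (ct y))"
    unfolding inL_def using e by (auto simp: algebra_simps)
  then have "redn (int (cs x) + \<alpha>, int (ct x) + \<beta>) = redn (int (cs y), int (ct y))"
    using redn_eq_iff by simp
  then show ?thesis using redn_small by simp
qed

lemma moved_pos: "x < N \<Longrightarrow> vv (hh x) \<noteq> hh (vv x) \<Longrightarrow> (cs x, ct x) = mpos"
proof -
  assume "x < N" "vv (hh x) \<noteq> hh (vv x)"
  then obtain k where "x = gmov k" "k < m" using moved_eq by blast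
  moreover have "a - 1 < a" "c - 1 < c" "b - 1 < a" using a_pos c_pos b_lt by auto
  ultimately show ?thesis unfolding gmov_def mpos_def by (auto simp: H_lt)
qed

lemma hpow_a: "k < m \<Longrightarrow> (hh ^^ a) (enc k 0 0) = enc (H k) 0 0"
proof -
  assume k: "k < m"
  have a': "a = Suc (a - 1)" using a_pos by simp
  have "(hh ^^ (a - 1)) (enc k 0 0) = enc k (a - 1) 0" using hpow_in[of k 0 "a - 1" 0] k a_pos c_pos by simp
  then have "(hh ^^ a) (enc k 0 0) = hh (enc k (a - 1) 0)" by (subst a') simp
  then show ?thesis using hh_enc[of k "a - 1" 0] k a_pos c_pos by simp
qed

lemma vword: "k < m \<Longrightarrow> vv ((hh ^^ b) ((vv ^^ (c - 1)) (enc k 0 0))) = enc (V k) 0 0"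
proof -
  assume k: "k < m"
  have "(vv ^^ (c - 1)) (enc k 0 0) = enc k 0 (c - 1)" using vpow_in[of k 0 0 "c - 1"] k a_pos c_pos by simp
  moreover have "(hh ^^ b) (enc k 0 (c - 1)) = enc k b (c - 1)" using hpow_in[of k 0 b "c - 1"] k b_lt c_pos by simp
  moreover have "vv (enc k b (c - 1)) = enc (V k) 0 0" using vv_enc[of k b "c - 1"] k b_lt c_pos by simp
  ultimately show ?thesis by simp
qed

end

locale cellT2 = cellp a b c + A: cellT a b c m H V + B: cellT a b c m H' V' for a b c m H V H' V'
begin

lemma iso_pow:
  assumes "isoP A.N \<sigma> A.hh A.vv B.hh B.vv"
  shows "\<sigma> ((A.hh ^^ i) x) = (B.hh ^^ i) (\<sigma> x)" "\<sigma> ((A.vv ^^ i) x) = (B.vv ^^ i) (\<sigma> x)"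
proof -
  have e1: "\<And>x. B.hh (\<sigma> x) = \<sigma> (A.hh x)" and e2: "\<And>x. B.vv (\<sigma> x) = \<sigma> (A.vv x)"
    using isoP_app[OF assms] by auto
  show "\<sigma> ((A.hh ^^ i) x) = (B.hh ^^ i) (\<sigma> x)" by (induction i) (simp_all add: e1[symmetric])
  show "\<sigma> ((A.vv ^^ i) x) = (B.vv ^^ i) (\<sigma> x)" by (induction i) (simp_all add: e2[symmetric])
qed

lemma reflect:
  assumes H2: "(H, V) \<in> sts_H2 m" and iso: "isoP A.N \<sigma> A.hh A.vv B.hh B.vv"
  shows "\<exists>\<tau>. isoP m \<tau> H V H' V'"
proof -
  have sp: "\<sigma> permutes {..<A.N}" using iso by (simp add: isoP_def)
  have sl: "x < A.N \<Longrightarrow> \<sigma> x < A.N" for x using sp perm_lt by blast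
  have si: "\<sigma> x = \<sigma> y \<Longrightarrow> x = y" for x y using permutes_inj[OF sp] by (meson injD)
  have FH2: "(A.hh, A.vv) \<in> sts_H2 A.N" using A.H2_FT H2 by simp
  then have st: "\<forall>i<A.N. \<forall>j<A.N. (i, j) \<in> (sts_step A.N A.hh A.vv)\<^sup>*"
    and c3: "card {i. i < A.N \<and> commutator A.hh A.vv i \<noteq> i} = 3"
    unfolding sts_H2_def sts_def by simp_all
  have conn: "\<forall>i<A.N. \<forall>j<A.N. \<exists>\<alpha> \<beta>. walk A.N A.hh A.vv i j \<alpha> \<beta>"
    using st A.F.conn_iff by blast
  have "{i. i < A.N \<and> commutator A.hh A.vv i \<noteq> i} \<noteq> {}" using c3 by (metis card.empty zero_neq_numeral)
  then obtain q where q: "q < A.N" "commutator A.hh A.vv q \<noteq> q" by blast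
  then have qm: "A.vv (A.hh q) \<noteq> A.hh (A.vv q)" using A.F.comm_moved by simp
  have "B.vv (B.hh (\<sigma> q)) \<noteq> B.hh (B.vv (\<sigma> q))"
    using qm isoP_app[OF iso] si by metis
  then have pq: "(cs (\<sigma> q), ct (\<sigma> q)) = (cs q, ct q)"
    using A.moved_pos[OF q(1) qm] B.moved_pos sl[OF q(1)] by simp
  have pres: "cs (\<sigma> x) = cs x \<and> ct (\<sigma> x) = ct x" if x: "x < A.N" for x
  proof -
    obtain \<alpha> \<beta> where w: "walk A.N A.hh A.vv q x \<alpha> \<beta>" using conn q(1) x by blast
    have w': "walk A.N B.hh B.vv (\<sigma> q) (\<sigma> x) \<alpha> \<beta>" using isoP_walk[OF iso w] .
    show ?thesis using A.posF_walk[OF w] B.posF_walk[OF w'] pq by simp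
  qed
  define \<tau> where "\<tau> k = (if k < m then ck (\<sigma> (enc k 0 0)) else k)" for k
  have tc: "\<sigma> (enc k 0 0) = enc (\<tau> k) 0 0" "\<tau> k < m" if k: "k < m" for k
  proof -
    have l: "enc k 0 0 < A.N" using A.corner_lt k .
    then have "cs (\<sigma> (enc k 0 0)) = 0" "ct (\<sigma> (enc k 0 0)) = 0" using pres[OF l] a_pos c_pos by auto
    then show "\<sigma> (enc k 0 0) = enc (\<tau> k) 0 0" unfolding \<tau>_def using k dec_enc by metis
    show "\<tau> k < m" unfolding \<tau>_def using k ck_lt sl[OF l] by simp
  qed
  have tH: "\<tau> (H k) = H' (\<tau> k)" if k: "k < m" for k
  proof -
    have "enc (\<tau> (H k)) 0 0 = \<sigma> (enc (H k) 0 0)" using tc A.H_lt k by simp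
    also have "\<dots> = \<sigma> ((A.hh ^^ a) (enc k 0 0))" using A.hpow_a k by simp
    also have "\<dots> = (B.hh ^^ a) (enc (\<tau> k) 0 0)" using iso_pow[OF iso] tc k by simp
    also have "\<dots> = enc (H' (\<tau> k)) 0 0" using B.hpow_a tc k by simp
    finally show ?thesis using a_pos c_pos by simp
  qed
  have tV: "\<tau> (V k) = V' (\<tau> k)" if k: "k < m" for k
  proof -
    have "enc (\<tau> (V k)) 0 0 = \<sigma> (enc (V k) 0 0)" using tc A.V_lt k by simp
    also have "\<dots> = \<sigma> (A.vv ((A.hh ^^ b) ((A.vv ^^ (c - 1)) (enc k 0 0))))" using A.vword k by simp
    also have "\<dots> = B.vv ((B.hh ^^ b) ((B.vv ^^ (c - 1)) (enc (\<tau> k) 0 0)))"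
    proof -
      have e1: "\<sigma> (A.vv x) = B.vv (\<sigma> x)" for x using isoP_app[OF iso] by simp
      show ?thesis using k by (simp add: e1 iso_pow[OF iso] tc)
    qed
    also have "\<dots> = enc (V' (\<tau> k)) 0 0" using B.vword tc k by simp
    finally show ?thesis using a_pos c_pos by simp
  qed
  have tp: "\<tau> permutes {..<m}"
  proof (rule perm_of_inj)
    show "\<And>x. x < m \<Longrightarrow> \<tau> x < m" using tc by blast
    show "\<And>x. \<not> x < m \<Longrightarrow> \<tau> x = x" unfolding \<tau>_def by simp
    show "inj_on \<tau> {..<m}"
    proof (rule inj_onI)
      fix x y assume "x \<in> {..<m}" "y \<in> {..<m}" "\<tau> x = \<tau> y"
      then have "\<sigma> (enc x 0 0) = \<sigma> (enc y 0 0)" using tc by simp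
      then have "enc x 0 0 = enc y 0 0" by (rule si)
      then show "x = y" using a_pos c_pos by simp
    qed
  qed
  have "H' \<circ> \<tau> = \<tau> \<circ> H"
  proof
    fix k show "(H' \<circ> \<tau>) k = (\<tau> \<circ> H) k"
    proof (cases "k < m")
      case True then show ?thesis using tH by simp
    next
      case False then show ?thesis unfolding \<tau>_def using A.T.h_ge B.T.h_ge by simp
    qed
  qed
  moreover have "V' \<circ> \<tau> = \<tau> \<circ> V"
  proof
    fix k show "(V' \<circ> \<tau>) k = (\<tau> \<circ> V) k"
    proof (cases "k < m")
      case True then show ?thesis using tV by simp
    next
      case False then show ?thesis unfolding \<tau>_def using A.T.v_ge B.T.v_ge by simp
    qed
  qed
  ultimately show ?thesis using tp unfolding isoP_def by blast
qed

lemma respect: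
  assumes iso: "isoP m \<tau> H V H' V'"
  shows "\<exists>\<sigma>. isoP A.N \<sigma> A.hh A.vv B.hh B.vv"
proof -
  have tp: "\<tau> permutes {..<m}" using iso by (simp add: isoP_def)
  have tl: "k < m \<Longrightarrow> \<tau> k < m" for k using tp perm_lt by blast
  have ti: "\<tau> x = \<tau> y \<Longrightarrow> x = y" for x y using permutes_inj[OF tp] by (meson injD)
  have tH: "H' (\<tau> k) = \<tau> (H k)" "V' (\<tau> k) = \<tau> (V k)" for k using isoP_app[OF iso] by auto
  have tHi: "inv H' (\<tau> k) = \<tau> (inv H k)" for k using tH(1)[of "inv H k"] by (metis A.H_Hi B.Hi_H)
  define \<sigma> where "\<sigma> x = (if x < A.N then enc (\<tau> (ck x)) (cs x) (ct x) else x)" for x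
  have se: "\<sigma> (enc k s t) = enc (\<tau> k) s t" if "k < m" "s < a" "t < c" for k s t
    unfolding \<sigma>_def using that enc_lt by simp
  have sp: "\<sigma> permutes {..<A.N}"
  proof (rule perm_of_inj)
    show "\<And>x. x < A.N \<Longrightarrow> \<sigma> x < A.N" unfolding \<sigma>_def using tl ck_lt enc_lt by simp
    show "\<And>x. \<not> x < A.N \<Longrightarrow> \<sigma> x = x" unfolding \<sigma>_def by simp
    show "inj_on \<sigma> {..<A.N}"
    proof (rule inj_onI)
      fix x y assume "x \<in> {..<A.N}" "y \<in> {..<A.N}" "\<sigma> x = \<sigma> y"
      then have "enc (\<tau> (ck x)) (cs x) (ct x) = enc (\<tau> (ck y)) (cs y) (ct y)" unfolding \<sigma>_def by simp
      then have "ck x = ck y" "cs x = cs y" "ct x = ct y" using ti by auto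
      then show "x = y" using dec_enc by metis
    qed
  qed
  have "B.hh (\<sigma> x) = \<sigma> (A.hh x)" for x
  proof (cases "x < A.N")
    case True
    then obtain k s t where x: "x = enc k s t" "k < m" "s < a" "t < c" by (metis enc_cases)
    show ?thesis unfolding x using x tl se tH A.H_lt a_pos
      by (simp add: A.hh_enc B.hh_enc)
  next
    case False then show ?thesis unfolding \<sigma>_def by (simp add: hF_out)
  qed
  moreover have "B.vv (\<sigma> x) = \<sigma> (A.vv x)" for x
  proof (cases "x < A.N")
    case True
    then obtain k s t where x: "x = enc k s t" "k < m" "s < a" "t < c" by (metis enc_cases)
    have "s + a - b < a" if "\<not> b \<le> s" using that b_lt by arith
    then show ?thesis unfolding x using x tl se tH tHi A.V_lt A.Hi_lt c_pos b_lt
      by (simp add: A.vv_enc B.vv_enc)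
  next
    case False then show ?thesis unfolding \<sigma>_def by (simp add: vF_out)
  qed
  ultimately show ?thesis using sp unfolding isoP_def by (intro exI[of _ \<sigma>]) (auto simp: fun_eq_iff)
qed

end

lemma three_cycle:
  assumes inj: "inj f" and fin: "finite M" and c3: "card M = 3"
    and cl: "\<And>x. x \<in> M \<Longrightarrow> f x \<in> M \<and> f x \<noteq> x"
    and x: "x \<in> M" and y: "y \<in> M"
  shows "y = x \<or> y = f x \<or> y = f (f x)"
proof (rule ccontr)
  assume ny: "\<not> (y = x \<or> y = f x \<or> y = f (f x))"
  have fx: "f x \<in> M" "f x \<noteq> x" using cl x by auto
  have ffx: "f (f x) \<in> M" "f (f x) \<noteq> f x" using cl fx by auto
  have fy: "f y \<in> M" "f y \<noteq> y" using cl y by auto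
  show False
  proof (cases "f (f x) = x")
    case True
    have "f y \<noteq> x" using True ny inj by (metis injD)
    moreover have "f y \<noteq> f x" using ny inj by (metis injD)
    ultimately have "card {x, f x, y, f y} = 4" using fx ny fy by auto
    moreover have "{x, f x, y, f y} \<subseteq> M" using x fx y fy by auto
    then have "card {x, f x, y, f y} \<le> card M" by (rule card_mono[OF fin])
    ultimately show False using c3 by simp
  next
    case False
    then have "card {x, f x, f (f x), y} = 4" using fx ffx ny by auto
    moreover have "{x, f x, f (f x), y} \<subseteq> M" using x fx ffx y by auto
    then have "card {x, f x, f (f x), y} \<le> card M" by (rule card_mono[OF fin])
    ultimately show False using c3 by simp
  qed
qed

lemma funpow_inv_cancel: "bij (f::'a \<Rightarrow> 'a) \<Longrightarrow> (f ^^ t) ((inv f ^^ t) z) = z"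
proof (induction t arbitrary: z)
  case 0 then show ?case by simp
next
  case (Suc t)
  have e1: "(inv f ^^ Suc t) z = inv f ((inv f ^^ t) z)" by simp
  have e2: "(f ^^ Suc t) w = (f ^^ t) (f w)" for w by (simp only: funpow_Suc_right o_apply)
  have "f (inv f y) = y" for y using Suc.prems by (simp add: bij_is_surj surj_f_inv_f)
  then show ?case unfolding e1 e2 using Suc.IH Suc.prems by simp
qed

lemma funpow_inj: "inj (f::'a \<Rightarrow> 'a) \<Longrightarrow> inj (f ^^ t)"
  by (induction t) (simp_all add: inj_compose)

locale surjS = cellp a b c + surf n h v for a b c n h v +
  assumes H2: "(h, v) \<in> sts_H2 n" and per: "period_lattice n h v = range (Mlin a b c)"
begin

lemma conn: "i < n \<Longrightarrow> j < n \<Longrightarrow> \<exists>\<alpha> \<beta>. walk n h v i j \<alpha> \<beta>"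
  using H2 conn_iff unfolding sts_H2_def sts_def by auto

lemma c3: "card {i. i < n \<and> commutator h v i \<noteq> i} = 3"
  using H2 unfolding sts_H2_def sts_def by auto

lemma closed_inL: "walk n h v i i \<alpha> \<beta> \<Longrightarrow> inL (\<alpha>, \<beta>)"
proof -
  assume w: "walk n h v i i \<alpha> \<beta>"
  then have "(\<alpha>, \<beta>) \<in> period_lattice n h v" unfolding period_lattice_def
    using walk_lt[OF w] by (intro gen_subgroup.gen) auto
  then show ?thesis using per inL_range by auto
qed

definition q0 :: nat where "q0 = (SOME q. q < n \<and> commutator h v q \<noteq> q)"

lemma q0: "q0 < n" "commutator h v q0 \<noteq> q0"
proof -
  have "{i. i < n \<and> commutator h v i \<noteq> i} \<noteq> {}" using c3 by (metis card.empty zero_neq_numeral)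
  then have "\<exists>q. q < n \<and> commutator h v q \<noteq> q" by blast
  then show "q0 < n" "commutator h v q0 \<noteq> q0" unfolding q0_def by (metis (mono_tags, lifting) someI_ex)+
qed

definition hol0 :: "nat \<Rightarrow> int \<times> int" where
  "hol0 x = (SOME p. walk n h v q0 x (fst p) (snd p))"

lemma hol0: "x < n \<Longrightarrow> walk n h v q0 x (fst (hol0 x)) (snd (hol0 x))"
proof -
  assume "x < n"
  then obtain \<alpha> \<beta> where "walk n h v q0 x \<alpha> \<beta>" using conn q0 by blast
  then have "\<exists>p. walk n h v q0 x (fst p) (snd p)" by (metis fst_conv snd_conv)
  then show ?thesis unfolding hol0_def by (rule someI_ex)
qed

definition posS :: "nat \<Rightarrow> nat \<times> nat" where
  "posS x = redn (int b - 1 + fst (hol0 x), int c - 1 + snd (hol0 x))"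

lemma posS_lt: "fst (posS x) < a" "snd (posS x) < c" unfolding posS_def using redn_lt by auto

lemma posS_walk:
  assumes w: "walk n h v x y \<alpha> \<beta>"
  shows "posS y = redn (int (fst (posS x)) + \<alpha>, int (snd (posS x)) + \<beta>)"
proof -
  have xy: "x < n" "y < n" using walk_lt[OF w] by auto
  have w1: "walk n h v q0 x (fst (hol0 x)) (snd (hol0 x))" using hol0 xy by simp
  have w2: "walk n h v q0 y (fst (hol0 y)) (snd (hol0 y))" using hol0 xy by simp
  have "walk n h v q0 q0 ((fst (hol0 x) + \<alpha>) + - fst (hol0 y)) ((snd (hol0 x) + \<beta>) + - snd (hol0 y))"
    using walk_comp[OF walk_comp[OF w1 w] walk_rev[OF w2]] .
  then have l: "inL ((fst (hol0 x) + \<alpha>) + - fst (hol0 y), (snd (hol0 x) + \<beta>) + - snd (hol0 y))"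
    by (rule closed_inL)
  have "posS y = redn (int b - 1 + fst (hol0 x) + \<alpha>, int c - 1 + snd (hol0 x) + \<beta>)"
    unfolding posS_def redn_eq_iff using inL_neg[OF l] by (simp add: algebra_simps)
  also have "\<dots> = redn (int (fst (posS x)) + \<alpha>, int (snd (posS x)) + \<beta>)"
    unfolding posS_def using redn_shift[of "(int b - 1 + fst (hol0 x), int c - 1 + snd (hol0 x))" \<alpha> \<beta>]
    by (simp add: algebra_simps)
  finally show ?thesis .
qed

lemma posS_q0: "posS q0 = mpos"
proof -
  have w: "walk n h v q0 q0 (fst (hol0 q0)) (snd (hol0 q0))" using hol0 q0 by simp
  have "inL (fst (hol0 q0), snd (hol0 q0))" using closed_inL[OF w] .
  then have "posS q0 = redn (int b - 1, int c - 1)"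
    unfolding posS_def redn_eq_iff by simp
  then show ?thesis using mpos_redn by simp
qed

lemma redn_nat: "q < c \<Longrightarrow> redn (int p, int q) = (p mod a, q)"
  unfolding redn_def by (simp add: nat_mod_distrib)

lemma pos_self: "fst p < a \<Longrightarrow> snd p < c \<Longrightarrow> redn (int (fst p), int (snd p)) = p"
  using redn_small[of "fst p" "snd p"] by simp

definition cm :: "nat \<Rightarrow> nat" where "cm = commutator h v"

lemma cm_bij: "bij cm"
  unfolding cm_def commutator_def
  using permutes_bij[OF hp] permutes_bij[OF vp] bij_comp bij_imp_bij_inv
  by (metis (no_types, lifting) bij_betw_inv_into inv_def)

lemma cm_walk: "x < n \<Longrightarrow> walk n h v x (cm x) 0 0"
proof -
  assume x: "x < n"
  have "walk n h v x (h x) (0 + 1) 0" by (rule walk_h[OF walk_refl[OF x]])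
  then have "walk n h v x (v (h x)) 1 (0 + 1)" using walk_v by fastforce
  then have "walk n h v x (inv h (v (h x))) (1 - 1) 1" using walk_hi by fastforce
  then have "walk n h v x (inv v (inv h (v (h x)))) 0 (1 - 1)" using walk_vi by fastforce
  then show ?thesis unfolding cm_def commutator_def by simp
qed

lemma moved_posS: "x < n \<Longrightarrow> v (h x) \<noteq> h (v x) \<Longrightarrow> posS x = mpos"
proof -
  assume x: "x < n" "v (h x) \<noteq> h (v x)"
  let ?M = "{i. i < n \<and> commutator h v i \<noteq> i}"
  have cl: "cm y \<in> ?M \<and> cm y \<noteq> y" if "y \<in> ?M" for y
  proof -
    have y: "y < n" "cm y \<noteq> y" using that cm_def by auto
    have "cm y < n" using cm_walk[OF y(1)] walk_lt by blast
    moreover have "cm (cm y) \<noteq> cm y" using y(2) cm_bij by (metis bij_is_inj injD)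
    ultimately show ?thesis using y cm_def by auto
  qed
  have inM: "x \<in> ?M" "q0 \<in> ?M" using x q0 comm_moved by auto
  have "x = q0 \<or> x = cm q0 \<or> x = cm (cm q0)"
    using three_cycle[OF bij_is_inj[OF cm_bij] _ c3 cl inM(2) inM(1)] by simp
  moreover have "posS (cm y) = posS y" if "y < n" for y
    using posS_walk[OF cm_walk[OF that]] pos_self posS_lt by simp
  moreover have "cm q0 < n" using cm_walk[OF q0(1)] walk_lt by blast
  ultimately show ?thesis using posS_q0 q0 by auto
qed

lemma commute_at: "posS z \<noteq> mpos \<Longrightarrow> v (h z) = h (v z)"
proof (cases "z < n")
  case True
  then show "posS z \<noteq> mpos \<Longrightarrow> v (h z) = h (v z)" using moved_posS by blast
next
  case False
  then show ?thesis using h_ge v_ge by simp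
qed

lemma comm_row: "(\<forall>i<r. posS ((h ^^ i) y) \<noteq> mpos) \<Longrightarrow> v ((h ^^ r) y) = (h ^^ r) (v y)"
proof (induction r)
  case 0 then show ?case by simp
next
  case (Suc r)
  have "v ((h ^^ Suc r) y) = v (h ((h ^^ r) y))" by simp
  also have "\<dots> = h (v ((h ^^ r) y))" using commute_at Suc.prems by simp
  also have "\<dots> = h ((h ^^ r) (v y))" using Suc by simp
  finally show ?case by simp
qed

lemma comm_rect: "(\<forall>i<r. \<forall>j<q. posS ((h ^^ i) ((v ^^ j) y)) \<noteq> mpos) \<Longrightarrow> (v ^^ q) ((h ^^ r) y) = (h ^^ r) ((v ^^ q) y)"
proof (induction q)
  case 0 then show ?case by simp
next
  case (Suc q)
  have "(v ^^ Suc q) ((h ^^ r) y) = v ((v ^^ q) ((h ^^ r) y))" by simp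
  also have "\<dots> = v ((h ^^ r) ((v ^^ q) y))" using Suc by simp
  also have "\<dots> = (h ^^ r) (v ((v ^^ q) y))" using comm_row[of r "(v ^^ q) y"] Suc.prems by simp
  finally show ?case by simp
qed

lemma pos_hv: "y < n \<Longrightarrow> posS ((h ^^ i) ((v ^^ j) y)) = redn (int (fst (posS y)) + int i, int (snd (posS y)) + int j)"
proof -
  assume y: "y < n"
  have "walk n h v y ((v ^^ j) y) 0 (0 + int j)" by (rule walk_vpow[OF walk_refl[OF y]])
  from walk_hpow[OF this, of i] have "walk n h v y ((h ^^ i) ((v ^^ j) y)) (int i) (int j)" by simp
  from posS_walk[OF this] show ?thesis .
qed

definition J :: "nat set" where "J = {x. x < n \<and> posS x = (0, 0)}"

definition Phi :: "nat \<Rightarrow> nat \<Rightarrow> nat \<Rightarrow> nat" where "Phi j s t = (h ^^ s) ((v ^^ t) j)"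

lemma Phi_lt: "j < n \<Longrightarrow> Phi j s t < n" unfolding Phi_def using hpow_lt vpow_lt by simp

lemma Phi_pos: "j \<in> J \<Longrightarrow> s < a \<Longrightarrow> t < c \<Longrightarrow> posS (Phi j s t) = (s, t)"
  unfolding Phi_def J_def using pos_hv redn_small by simp

lemma J_fin: "finite J" unfolding J_def by simp

lemma Phi_bij: "bij_betw (\<lambda>(j, s, t). Phi j s t) (J \<times> {..<a} \<times> {..<c}) {..<n}"
proof (rule bij_betw_imageI)
  show "inj_on (\<lambda>(j, s, t). Phi j s t) (J \<times> {..<a} \<times> {..<c})"
  proof (rule inj_onI)
    fix p p' assume pp: "p \<in> J \<times> {..<a} \<times> {..<c}" "p' \<in> J \<times> {..<a} \<times> {..<c}"
      and e0: "(\<lambda>(j, s, t). Phi j s t) p = (\<lambda>(j, s, t). Phi j s t) p'"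
    obtain j s t j' s' t' where pe: "p = (j, s, t)" "p' = (j', s', t')" by (cases p, cases p') auto
    have jj: "j \<in> J" "s < a" "t < c" "j' \<in> J" "s' < a" "t' < c" using pp pe by auto
    have e: "Phi j s t = Phi j' s' t'" using e0 pe by simp
    then have "(s, t) = (s', t')" using Phi_pos jj by metis
    then have st: "s = s'" "t = t'" by auto
    with e have "(h ^^ s) ((v ^^ t) j) = (h ^^ s) ((v ^^ t) j')" unfolding Phi_def by simp
    then have "j = j'"
      using funpow_inj[OF permutes_inj[OF hp]] funpow_inj[OF permutes_inj[OF vp]]
      by (metis injD)
    then show "p = p'" using pe st by simp
  qed
  show "(\<lambda>(j, s, t). Phi j s t) ` (J \<times> {..<a} \<times> {..<c}) = {..<n}"
  proof
    show "(\<lambda>(j, s, t). Phi j s t) ` (J \<times> {..<a} \<times> {..<c}) \<subseteq> {..<n}"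
      using Phi_lt J_def by auto
    show "{..<n} \<subseteq> (\<lambda>(j, s, t). Phi j s t) ` (J \<times> {..<a} \<times> {..<c})"
    proof
      fix x assume "x \<in> {..<n}"
      then have x: "x < n" by simp
      define s where "s = fst (posS x)"
      define t where "t = snd (posS x)"
      define j where "j = (inv v ^^ t) ((inv h ^^ s) x)"
      have w: "walk n h v x j (0 - int s) (0 - int t)" unfolding j_def
        using walk_vipow[OF walk_hipow[OF walk_refl[OF x]]] .
      then have jn: "j < n" using walk_lt by blast
      have "posS j = redn (int s + (0 - int s), int t + (0 - int t))"
        using posS_walk[OF w] s_def t_def by simp
      then have "posS j = (0, 0)" using redn_small[of 0 0] a_pos c_pos by simp
      then have jJ: "j \<in> J" using jn J_def by simp
      have "Phi j s t = x" unfolding Phi_def j_def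
        using funpow_inv_cancel[OF permutes_bij[OF vp]] funpow_inv_cancel[OF permutes_bij[OF hp]] by simp
      moreover have "s < a" "t < c" using posS_lt s_def t_def by auto
      ultimately show "x \<in> (\<lambda>(j, s, t). Phi j s t) ` (J \<times> {..<a} \<times> {..<c})" using jJ
        by (intro image_eqI[of _ _ "(j, s, t)"]) auto
    qed
  qed
qed

lemma n_eq: "n = card J * (a * c)"
proof -
  have "card (J \<times> {..<a} \<times> {..<c}) = n" using bij_betw_same_card[OF Phi_bij] by simp
  then show ?thesis by (simp add: card_cartesian_product)
qed

lemma hpow_a_J: "j \<in> J \<Longrightarrow> (h ^^ a) j \<in> J"
proof -
  assume j: "j \<in> J"
  have jn: "j < n" using j J_def by simp
  have "posS ((h ^^ a) ((v ^^ 0) j)) = redn (int a, 0)" using pos_hv[OF jn, of a 0] j J_def by simp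
  also have "\<dots> = (0, 0)" using redn_L[of "(int a, 0)"] unfolding inL_def
    by (simp) (metis mult.right_neutral mult_zero_right add.right_neutral)
  finally show ?thesis using hpow_lt jn J_def by simp
qed

definition Vw :: "nat \<Rightarrow> nat" where "Vw j = v ((h ^^ b) ((v ^^ (c - 1)) j))"

lemma Vw_J: "j \<in> J \<Longrightarrow> Vw j \<in> J"
proof -
  assume j: "j \<in> J"
  have jn: "j < n" using j J_def by simp
  have w0: "walk n h v j ((v ^^ (c - 1)) j) 0 (0 + int (c - 1))" by (rule walk_vpow[OF walk_refl[OF jn]])
  have w1: "walk n h v j ((h ^^ b) ((v ^^ (c - 1)) j)) (0 + int b) (int (c - 1))" using walk_hpow[OF w0, of b] by simp
  have w2: "walk n h v j (Vw j) (int b) (int (c - 1) + 1)" unfolding Vw_def using walk_v[OF w1] by simp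
  have "int (c - 1) + 1 = int c" using c_pos by simp
  then have "posS (Vw j) = redn (int b, int c)" using posS_walk[OF w2] j J_def by simp
  also have "\<dots> = (0, 0)" using redn_L[of "(int b, int c)"] unfolding inL_def
    by (simp) (metis mult.right_neutral mult_zero_right add_0)
  finally show ?thesis using walk_lt[OF w2] J_def by simp
qed

lemma Vw_inj: "Vw x = Vw y \<Longrightarrow> x = y"
  unfolding Vw_def using permutes_inj[OF hp] permutes_inj[OF vp] funpow_inj
  by (metis injD)

end

context surjS begin

definition mJ :: nat where "mJ = card J"

definition bet :: "nat \<Rightarrow> nat" where "bet = (SOME \<beta>. bij_betw \<beta> {..<mJ} J)"

lemma bet_bij: "bij_betw bet {..<mJ} J"
proof -
  obtain \<beta> where "bij_betw \<beta> {0..<card J} J" using ex_bij_betw_nat_finite[OF J_fin] by blast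
  then have "\<exists>\<beta>. bij_betw \<beta> {..<mJ} J" unfolding mJ_def by (metis atLeast0LessThan)
  then show ?thesis unfolding bet_def by (rule someI_ex)
qed

definition bi :: "nat \<Rightarrow> nat" where "bi = inv_into {..<mJ} bet"

lemma bet_J: "k < mJ \<Longrightarrow> bet k \<in> J" using bet_bij bij_betwE by blast
lemma bi_lt: "x \<in> J \<Longrightarrow> bi x < mJ" unfolding bi_def using bet_bij
  by (metis bij_betw_def inv_into_into lessThan_iff)
lemma bet_bi: "x \<in> J \<Longrightarrow> bet (bi x) = x" unfolding bi_def using bet_bij
  by (metis bij_betw_def f_inv_into_f)
lemma bi_bet: "k < mJ \<Longrightarrow> bi (bet k) = k" unfolding bi_def using bet_bij
  by (metis bij_betw_def inv_into_f_f lessThan_iff)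
lemma bet_inj: "k < mJ \<Longrightarrow> k' < mJ \<Longrightarrow> bet k = bet k' \<Longrightarrow> k = k'" by (metis bi_bet)

definition HH :: "nat \<Rightarrow> nat" where "HH k = (if k < mJ then bi ((h ^^ a) (bet k)) else k)"
definition VV :: "nat \<Rightarrow> nat" where "VV k = (if k < mJ then bi (Vw (bet k)) else k)"

lemma bet_HH: "k < mJ \<Longrightarrow> bet (HH k) = (h ^^ a) (bet k)"
  unfolding HH_def using bet_bi hpow_a_J bet_J by simp
lemma bet_VV: "k < mJ \<Longrightarrow> bet (VV k) = Vw (bet k)"
  unfolding VV_def using bet_bi Vw_J bet_J by simp

lemma HH_perm: "HH permutes {..<mJ}"
proof (rule perm_of_inj)
  show "\<And>x. x < mJ \<Longrightarrow> HH x < mJ" unfolding HH_def using bi_lt hpow_a_J bet_J by simp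
  show "\<And>x. \<not> x < mJ \<Longrightarrow> HH x = x" unfolding HH_def by simp
  show "inj_on HH {..<mJ}"
  proof (rule inj_onI)
    fix x y assume "x \<in> {..<mJ}" "y \<in> {..<mJ}" "HH x = HH y"
    then have "(h ^^ a) (bet x) = (h ^^ a) (bet y)" using bet_HH by (metis lessThan_iff)
    then have "bet x = bet y" using funpow_inj[OF permutes_inj[OF hp]] by (metis injD)
    then show "x = y" using bet_inj \<open>x \<in> {..<mJ}\<close> \<open>y \<in> {..<mJ}\<close> by simp
  qed
qed

lemma VV_perm: "VV permutes {..<mJ}"
proof (rule perm_of_inj)
  show "\<And>x. x < mJ \<Longrightarrow> VV x < mJ" unfolding VV_def using bi_lt Vw_J bet_J by simp
  show "\<And>x. \<not> x < mJ \<Longrightarrow> VV x = x" unfolding VV_def by simp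
  show "inj_on VV {..<mJ}"
  proof (rule inj_onI)
    fix x y assume "x \<in> {..<mJ}" "y \<in> {..<mJ}" "VV x = VV y"
    then have "Vw (bet x) = Vw (bet y)" using bet_VV by (metis lessThan_iff)
    then have "bet x = bet y" by (rule Vw_inj)
    then show "x = y" using bet_inj \<open>x \<in> {..<mJ}\<close> \<open>y \<in> {..<mJ}\<close> by simp
  qed
qed

lemma posJ: "j \<in> J \<Longrightarrow> q < c \<Longrightarrow> posS ((h ^^ i) ((v ^^ q) j)) = (i mod a, q)"
  using pos_hv[of j i q] redn_nat J_def by simp

lemma n_mJ: "n = mJ * (a * c)" using n_eq mJ_def by simp

lemma surj_main: "\<exists>\<sigma>. isoP n \<sigma> (hF mJ HH) (vF mJ HH VV) h v"
proof -
  interpret C: cellT a b c mJ HH VV using HH_perm VV_perm by unfold_locales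
  define \<sigma> where "\<sigma> x = (if x < n then Phi (bet (ck x)) (cs x) (ct x) else x)" for x
  have se: "\<sigma> (enc k s t) = Phi (bet k) s t" if "k < mJ" "s < a" "t < c" for k s t
    unfolding \<sigma>_def using that enc_lt[OF that] n_mJ by simp
  have sp: "\<sigma> permutes {..<n}"
  proof (rule perm_of_inj)
    show "\<And>x. x < n \<Longrightarrow> \<sigma> x < n" unfolding \<sigma>_def using Phi_lt bet_J J_def ck_lt n_mJ by simp
    show "\<And>x. \<not> x < n \<Longrightarrow> \<sigma> x = x" unfolding \<sigma>_def by simp
    show "inj_on \<sigma> {..<n}"
    proof (rule inj_onI)
      fix x y assume xy: "x \<in> {..<n}" "y \<in> {..<n}" "\<sigma> x = \<sigma> y"
      then have kk: "ck x < mJ" "ck y < mJ" using ck_lt n_mJ by auto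
      have "(\<lambda>(j, s, t). Phi j s t) (bet (ck x), cs x, ct x) = (\<lambda>(j, s, t). Phi j s t) (bet (ck y), cs y, ct y)"
        using xy unfolding \<sigma>_def by simp
      moreover have "(bet (ck x), cs x, ct x) \<in> J \<times> {..<a} \<times> {..<c}" "(bet (ck y), cs y, ct y) \<in> J \<times> {..<a} \<times> {..<c}"
        using kk bet_J by auto
      ultimately have "(bet (ck x), cs x, ct x) = (bet (ck y), cs y, ct y)"
        using bij_betw_imp_inj_on[OF Phi_bij] by (meson inj_onD)
      then have "ck x = ck y" "cs x = cs y" "ct x = ct y" using bet_inj kk by auto
      then show "x = y" by (metis dec_enc)
    qed
  qed
  have hcomm: "h (\<sigma> x) = \<sigma> (C.hh x)" for x
  proof (cases "x < n")
    case False then show ?thesis unfolding \<sigma>_def using h_ge hF_out n_mJ by simp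
  next
    case True
    then obtain k s t where x: "x = enc k s t" "k < mJ" "s < a" "t < c" using enc_cases n_mJ by metis
    define j where "j = bet k"
    have jJ: "j \<in> J" using bet_J x j_def by simp
    have hs: "h (\<sigma> x) = Phi j (Suc s) t" unfolding x se[OF x(2-4)] Phi_def j_def by simp
    show ?thesis
    proof (cases "Suc s < a")
      case True
      then show ?thesis using hs x se C.hh_enc j_def by simp
    next
      case False
      then have sa: "Suc s = a" using x by simp
      have "C.hh x = enc (HH k) 0 t" using x False C.hh_enc by simp
      then have "\<sigma> (C.hh x) = (v ^^ t) ((h ^^ a) j)" using se[of "HH k" 0 t] C.H_lt x a_pos bet_HH j_def
        unfolding Phi_def by simp
      also have "\<dots> = (h ^^ a) ((v ^^ t) j)"
      proof -
        have P: "\<forall>i<a. \<forall>q<t. posS ((h ^^ i) ((v ^^ q) j)) \<noteq> mpos" 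
          proof (intro allI impI)
          fix i q assume "i < a" "q < t"
          then show "posS ((h ^^ i) ((v ^^ q) j)) \<noteq> mpos" using posJ[OF jJ] x unfolding mpos_def by auto
          qed
        from comm_rect[OF P] show ?thesis by simp
      qed
      finally show ?thesis using hs sa unfolding Phi_def by simp
    qed
  qed
  have vcomm: "v (\<sigma> x) = \<sigma> (C.vv x)" for x
  proof (cases "x < n")
    case False then show ?thesis unfolding \<sigma>_def using v_ge vF_out n_mJ by simp
  next
    case True
    then obtain k s t where x: "x = enc k s t" "k < mJ" "s < a" "t < c" using enc_cases n_mJ by metis
    define j where "j = bet k"
    have jJ: "j \<in> J" using bet_J x j_def by simp
    have vs: "v (\<sigma> x) = v ((h ^^ s) ((v ^^ t) j))" unfolding x se[OF x(2-4)] Phi_def j_def by simp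
    show ?thesis
    proof (cases "Suc t < c")
      case True
      have "C.vv x = enc k s (Suc t)" using x True C.vv_enc by simp
      then have "\<sigma> (C.vv x) = (h ^^ s) (v ((v ^^ t) j))" using se x True j_def unfolding Phi_def by simp
      also have "\<dots> = v ((h ^^ s) ((v ^^ t) j))"
      proof -
        have P: "\<forall>i<s. posS ((h ^^ i) ((v ^^ t) j)) \<noteq> mpos" 
          proof (intro allI impI)
          fix i assume "i < s"
          then show "posS ((h ^^ i) ((v ^^ t) j)) \<noteq> mpos" using posJ[OF jJ] x True unfolding mpos_def by auto
          qed
        from comm_row[OF P] show ?thesis by simp
      qed
      finally show ?thesis using vs by simp
    next
      case False
      then have tc: "t = c - 1" using x by simp
      define y where "y = (v ^^ (c - 1)) j"
      show ?thesis
      proof (cases "b \<le> s")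
        case True
        have "C.vv x = enc (VV k) (s - b) 0" using x False True C.vv_enc by simp
        then have "\<sigma> (C.vv x) = (h ^^ (s - b)) (v ((h ^^ b) y))"
          using se[of "VV k" "s - b" 0] C.V_lt x c_pos bet_VV j_def y_def unfolding Phi_def Vw_def by simp
        also have "\<dots> = v ((h ^^ (s - b)) ((h ^^ b) y))"
        proof -
          have P: "\<forall>i<s - b. posS ((h ^^ i) ((h ^^ b) y)) \<noteq> mpos" 
            proof (intro allI impI)
            fix i assume i: "i < s - b"
            have "(h ^^ i) ((h ^^ b) y) = (h ^^ (i + b)) ((v ^^ (c - 1)) j)" unfolding y_def by (simp add: funpow_add)
            moreover have "i + b < a" using i x by simp
            ultimately have "posS ((h ^^ i) ((h ^^ b) y)) = (i + b, c - 1)" using posJ[OF jJ, of "c - 1" "i + b"] c_pos by simp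
            then show "posS ((h ^^ i) ((h ^^ b) y)) \<noteq> mpos" using i x unfolding mpos_def by auto
            qed
          from comm_row[OF P] show ?thesis by simp
        qed
        finally have f: "\<sigma> (C.vv x) = v ((h ^^ (s - b)) ((h ^^ b) y))" .
        have "(h ^^ (s - b)) ((h ^^ b) y) = (h ^^ s) ((v ^^ t) j)"
        proof -
          have "s - b + b = s" using True by simp
          then show ?thesis unfolding y_def tc by (metis funpow_add comp_apply)
        qed
        then show ?thesis using vs f by simp
      next
        case nb: False
        define k' where "k' = inv HH k"
        have k': "k' < mJ" "HH k' = k" unfolding k'_def using C.Hi_lt x by auto
        define j' where "j' = bet k'"
        have j'J: "j' \<in> J" using bet_J k' j'_def by simp
        have jj': "(h ^^ a) j' = j" using bet_HH[OF k'(1)] k' j_def j'_def by simp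
        define y' where "y' = (v ^^ (c - 1)) j'"
        have "C.vv x = enc (VV k') (s + a - b) 0" using x False nb C.vv_enc k'_def by simp
        moreover have "s + a - b < a" using nb b_lt by arith
        ultimately have "\<sigma> (C.vv x) = (h ^^ (s + a - b)) (v ((h ^^ b) y'))"
          using se[of "VV k'" "s + a - b" 0] C.V_lt k' c_pos bet_VV j'_def y'_def unfolding Phi_def Vw_def by simp
        also have "\<dots> = v ((h ^^ (s + a - b)) ((h ^^ b) y'))"
        proof -
          have P: "\<forall>i<s + a - b. posS ((h ^^ i) ((h ^^ b) y')) \<noteq> mpos" 
            proof (intro allI impI)
            fix i assume i: "i < s + a - b"
            have "(h ^^ i) ((h ^^ b) y') = (h ^^ (i + b)) ((v ^^ (c - 1)) j')" unfolding y'_def by (simp add: funpow_add)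
            then have p: "posS ((h ^^ i) ((h ^^ b) y')) = ((i + b) mod a, c - 1)" using posJ[OF j'J, of "c - 1" "i + b"] c_pos by simp
            have "(i + b) mod a \<noteq> b - 1"
            proof (cases "i + b < a")
              case True then show ?thesis using nb by simp
            next
              case False
              then have "(i + b) mod a = i + b - a" using i nb x by (simp add: mod_if)
              moreover have "i + b - a \<noteq> b - 1" using i nb b_lt False by arith
              ultimately show ?thesis by simp
            qed
            then show "posS ((h ^^ i) ((h ^^ b) y')) \<noteq> mpos" using p nb unfolding mpos_def by auto
            qed
          from comm_row[OF P] show ?thesis by simp
        qed
        finally have f: "\<sigma> (C.vv x) = v ((h ^^ (s + a - b)) ((h ^^ b) y'))" .
        have e1: "(h ^^ (s + a - b)) ((h ^^ b) y') = (h ^^ s) ((h ^^ a) y')"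
        proof -
          have "s + a - b + b = s + a" using nb b_lt by simp
          then show ?thesis by (metis funpow_add comp_apply add.commute)
        qed
        have e2: "(h ^^ a) y' = (v ^^ (c - 1)) ((h ^^ a) j')"
        proof -
          have P: "\<forall>i<a. \<forall>q<c - 1. posS ((h ^^ i) ((v ^^ q) j')) \<noteq> mpos" 
            proof (intro allI impI)
            fix i q assume "i < a" "q < c - 1"
            then show "posS ((h ^^ i) ((v ^^ q) j')) \<noteq> mpos" using posJ[OF j'J] unfolding mpos_def by auto
            qed
          from comm_rect[OF P] show ?thesis by (simp add: y'_def)
        qed
        show ?thesis using vs jj' tc f e1 e2 y'_def by simp
      qed
    qed
  qed
  have "h \<circ> \<sigma> = \<sigma> \<circ> C.hh" "v \<circ> \<sigma> = \<sigma> \<circ> C.vv" using hcomm vcomm by (auto simp: fun_eq_iff)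
  then show ?thesis using sp n_mJ unfolding isoP_def by auto
qed

end

locale subgrp =
  fixes G :: "(int \<times> int) set"
  assumes gdiff: "\<And>u1 u2 w1 w2. (u1, u2) \<in> G \<Longrightarrow> (w1, w2) \<in> G \<Longrightarrow> (u1 - w1, u2 - w2) \<in> G"
    and gz: "(0, 0) \<in> G"
begin

lemma gneg: "(u1, u2) \<in> G \<Longrightarrow> (- u1, - u2) \<in> G" using gdiff[OF gz] by simp

lemma gadd: "(u1, u2) \<in> G \<Longrightarrow> (w1, w2) \<in> G \<Longrightarrow> (u1 + w1, u2 + w2) \<in> G"
  using gdiff[of u1 u2 "- w1" "- w2"] gneg by simp

lemma gmult_nat: "(u1, u2) \<in> G \<Longrightarrow> (int k * u1, int k * u2) \<in> G"
proof (induction k)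
  case 0 then show ?case using gz by simp
next
  case (Suc k)
  then have "(int k * u1 + u1, int k * u2 + u2) \<in> G" using gadd by blast
  then show ?case by (simp add: algebra_simps)
qed

lemma gmult: "(u1, u2) \<in> G \<Longrightarrow> (z * u1, z * u2) \<in> G"
proof (cases "z \<ge> 0")
  case True
  assume u: "(u1, u2) \<in> G"
  obtain k where "z = int k" using True nonneg_int_cases by blast
  then show ?thesis using gmult_nat[OF u] by simp
next
  case False
  assume u: "(u1, u2) \<in> G"
  obtain k where "z = - int k" using False by (metis nonpos_int_cases not_le less_le)
  then show ?thesis using gneg[OF gmult_nat[OF u, of k]] by simp
qed

lemma hnf_exists:
  assumes k1: "(int k1, 0) \<in> G" "k1 > 0" and k2: "(0, int k2) \<in> G" "k2 > 0"
  shows "\<exists>a b c. 0 < a \<and> 0 < c \<and> b < a \<and> G = range (Mlin a b c)"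
proof -
  define c where "c = (LEAST y. y > 0 \<and> (\<exists>x. (x, int y) \<in> G))"
  have cex: "\<exists>y. y > 0 \<and> (\<exists>x. (x, int y) \<in> G)" using k2 by blast
  have c: "c > 0" "\<exists>x. (x, int c) \<in> G" using LeastI_ex[OF cex] unfolding c_def by auto
  have cmin: "\<And>y x. 0 < y \<Longrightarrow> y < c \<Longrightarrow> (x, int y) \<notin> G" unfolding c_def using not_less_Least by blast
  obtain x0 where x0: "(x0, int c) \<in> G" using c by blast
  define a where "a = (LEAST x. x > 0 \<and> (int x, 0) \<in> G)"
  have aex: "\<exists>x. x > 0 \<and> (int x, 0) \<in> G" using k1 by blast
  have a: "a > 0" "(int a, 0) \<in> G" using LeastI_ex[OF aex] unfolding a_def by auto
  have amin: "\<And>x. 0 < x \<Longrightarrow> x < a \<Longrightarrow> (int x, 0) \<notin> G" unfolding a_def using not_less_Least by blast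
  define b where "b = nat (x0 mod int a)"
  have b: "b < a" unfolding b_def using a by (simp add: nat_less_iff)
  have bi: "int b = x0 mod int a" unfolding b_def using a by simp
  have bc: "(int b, int c) \<in> G"
  proof -
    have "(- (x0 div int a) * int a, - (x0 div int a) * 0) \<in> G" using gmult[OF a(2)] by blast
    from gadd[OF x0 this] have "(x0 - (x0 div int a) * int a, int c) \<in> G" by simp
    moreover have "x0 - (x0 div int a) * int a = int b" using bi by (simp add: minus_div_mult_eq_mod)
    ultimately show ?thesis by simp
  qed
  have "G = range (Mlin a b c)"
  proof
    show "range (Mlin a b c) \<subseteq> G"
    proof
      fix p assume "p \<in> range (Mlin a b c)"
      then obtain x y where p: "p = (int a * x + int b * y, int c * y)" unfolding Mlin_def by auto
      have g1: "(x * int a, 0) \<in> G" using gmult[OF a(2), of x] by simp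
      have g2: "(y * int b, y * int c) \<in> G" using gmult[OF bc] by blast
      have "(x * int a + y * int b, 0 + y * int c) \<in> G" by (rule gadd[OF g1 g2])
      then show "p \<in> G" unfolding p by (simp add: algebra_simps)
    qed
    show "G \<subseteq> range (Mlin a b c)"
    proof
      fix p assume pG: "p \<in> G"
      obtain u w where p: "p = (u, w)" by (cases p)
      define y where "y = w div int c"
      have "(- y * int b, - y * int c) \<in> G" using gmult[OF bc] by blast
      from gadd[OF pG[unfolded p] this] have g1: "(u - y * int b, w - y * int c) \<in> G" by simp
      have "w - y * int c = w mod int c" unfolding y_def by (simp add: minus_div_mult_eq_mod)
      moreover have "w mod int c = 0"
      proof (rule ccontr)
        assume ne: "w mod int c \<noteq> 0"
        have "w mod int c \<ge> 0" "w mod int c < int c" using c(1) by auto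
        then have "0 < nat (w mod int c)" "nat (w mod int c) < c" using ne by auto
        moreover have "(u - y * int b, int (nat (w mod int c))) \<in> G" using g1 \<open>w - y * int c = w mod int c\<close>
          \<open>w mod int c \<ge> 0\<close> by simp
        ultimately show False using cmin by blast
      qed
      ultimately have g2: "(u - y * int b, 0) \<in> G" "w = y * int c" using g1 by auto
      define x where "x = (u - y * int b) div int a"
      have "(- x * int a, - x * 0) \<in> G" using gmult[OF a(2)] by blast
      from gadd[OF g2(1) this] have g3: "(u - y * int b - x * int a, 0) \<in> G" by simp
      have r: "u - y * int b - x * int a = (u - y * int b) mod int a" unfolding x_def by (simp add: minus_div_mult_eq_mod)
      have "(u - y * int b) mod int a = 0"
      proof (rule ccontr)
        assume ne: "(u - y * int b) mod int a \<noteq> 0"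
        have "(u - y * int b) mod int a \<ge> 0" "(u - y * int b) mod int a < int a" using a(1) by auto
        then have "0 < nat ((u - y * int b) mod int a)" "nat ((u - y * int b) mod int a) < a" using ne by auto
        moreover have "(int (nat ((u - y * int b) mod int a)), 0) \<in> G" using g3 r
          \<open>(u - y * int b) mod int a \<ge> 0\<close> by simp
        ultimately show False using amin by blast
      qed
      then have "u = int a * x + int b * y" using r by (simp add: algebra_simps)
      then have "p = Mlin a b c (x, y)" unfolding Mlin_def p using g2(2) by (simp add: algebra_simps)
      then show "p \<in> range (Mlin a b c)" by simp
    qed
  qed
  then show ?thesis using a(1) c(1) b by blast
qed

end

lemma hnf_unique:
  assumes "0 < a" "0 < c" "b < a" "0 < a'" "0 < c'" "b' < a'"
    and e: "range (Mlin a b c) = range (Mlin a' b' c')"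
  shows "a = a' \<and> b = b' \<and> c = c'"
proof -
  have mem: "\<And>p. p \<in> range (Mlin a b c) \<longleftrightarrow> p \<in> range (Mlin a' b' c')" using e by simp
  have ex: "(\<exists>x y. (u, w) = Mlin a b c (x, y)) \<longleftrightarrow> (\<exists>x y. (u, w) = Mlin a' b' c' (x, y))" for u w
    using mem[of "(u, w)"] by (auto simp: image_iff)
  have "\<exists>x y. (int a, 0) = Mlin a b c (x, y)" by (rule exI[of _ 1], rule exI[of _ 0]) (simp add: Mlin_def)
  then have "\<exists>x y. (int a, 0) = Mlin a' b' c' (x, y)" using ex[of "int a" 0] by blast
  then obtain x y where xy: "int a = int a' * x + int b' * y" "0 = int c' * y" unfolding Mlin_def by auto
  then have "int a' dvd int a" using assms by simp
  have "\<exists>x y. (int a', 0) = Mlin a' b' c' (x, y)" by (rule exI[of _ 1], rule exI[of _ 0]) (simp add: Mlin_def)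
  then have "\<exists>x y. (int a', 0) = Mlin a b c (x, y)" using ex[of "int a'" 0] by blast
  then obtain x y where xy: "int a' = int a * x + int b * y" "0 = int c * y" unfolding Mlin_def by auto
  then have "int a dvd int a'" using assms by simp
  have aa: "a = a'" using \<open>int a dvd int a'\<close> \<open>int a' dvd int a\<close> by (simp add: dvd_antisym)
  have "\<exists>x y. (int b, int c) = Mlin a b c (x, y)" by (rule exI[of _ 0], rule exI[of _ 1]) (simp add: Mlin_def)
  then have "\<exists>x y. (int b, int c) = Mlin a' b' c' (x, y)" using ex[of "int b" "int c"] by blast
  then obtain x1 y1 where xy1: "int b = int a' * x1 + int b' * y1" "int c = int c' * y1" unfolding Mlin_def by auto
  have "\<exists>x y. (int b', int c') = Mlin a' b' c' (x, y)" by (rule exI[of _ 0], rule exI[of _ 1]) (simp add: Mlin_def)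
  then have "\<exists>x y. (int b', int c') = Mlin a b c (x, y)" using ex[of "int b'" "int c'"] by blast
  then obtain x2 y2 where xy2: "int b' = int a * x2 + int b * y2" "int c' = int c * y2" unfolding Mlin_def by auto
  have "int c' dvd int c" by (rule dvdI[OF xy1(2)])
  moreover have "int c dvd int c'" by (rule dvdI[OF xy2(2)])
  ultimately have cc: "c = c'" by (simp add: dvd_antisym)
  then have "y1 = 1" using xy1(2) assms by simp
  then have "int b - int b' = int a * x1" using xy1(1) aa by simp
  moreover have "\<bar>int b - int b'\<bar> < int a" using assms aa by linarith
  ultimately have "\<bar>int a * x1\<bar> < int a" by simp
  then have "x1 = 0"
  proof -
    assume l: "\<bar>int a * x1\<bar> < int a"
    show "x1 = 0"
    proof (rule ccontr)
      assume "x1 \<noteq> 0"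
      then have "\<bar>x1\<bar> \<ge> 1" by simp
      then have "\<bar>int a * x1\<bar> \<ge> int a" using assms by (simp add: abs_mult mult_le_cancel_left1)
      with l show False by simp
    qed
  qed
  then show ?thesis using aa cc \<open>int b - int b' = int a * x1\<close> by simp
qed

lemma per_subgrp: "subgrp (period_lattice n h v)"
  unfolding period_lattice_def by unfold_locales (auto intro: gen_subgroup.intros)

lemma per_hnf:
  assumes "(h, v) \<in> sts_H2 n" "n > 0"
  shows "\<exists>a b c. 0 < a \<and> 0 < c \<and> b < a \<and> period_lattice n h v = range (Mlin a b c)"
proof -
  interpret S: surf n h v using assms(1) by (simp add: sts_H2_def surf_sts)
  interpret G: subgrp "period_lattice n h v" by (rule per_subgrp)
  have "permutation h" using S.hp permutation_permutes by blast
  then obtain k1 where k1: "(h ^^ k1) = id" "k1 > 0" by (rule permutation_is_nilpotent)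
  have "permutation v" using S.vp permutation_permutes by blast
  then obtain k2 where k2: "(v ^^ k2) = id" "k2 > 0" by (rule permutation_is_nilpotent)
  have "walk n h v 0 ((h ^^ k1) 0) (0 + int k1) 0" using S.walk_hpow[OF walk.refl[of 0 n h v]] assms(2) by blast
  then have "(int k1, 0) \<in> period_lattice n h v" unfolding period_lattice_def using k1 assms(2)
    by (intro gen_subgroup.gen) auto
  moreover have "walk n h v 0 ((v ^^ k2) 0) 0 (0 + int k2)" using S.walk_vpow[OF walk.refl[of 0 n h v]] assms(2) by blast
  then have "(0, int k2) \<in> period_lattice n h v" unfolding period_lattice_def using k2 assms(2)
    by (intro gen_subgroup.gen) auto
  ultimately show ?thesis using G.hnf_exists k1 k2 by blast
qed

lemma sts_H2_fin: "finite (sts_H2 n)"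
proof -
  have "sts_H2 n \<subseteq> {p. p permutes {..<n}} \<times> {p. p permutes {..<n}}"
    by (auto simp: sts_H2_def sts_def)
  then show ?thesis using finite_permutations[of "{..<n}"] by (auto intro: finite_subset)
qed

lemma E_fin: "finite (E n)"
  unfolding E_RH by (rule finite_quotient[OF sts_H2_fin]) (auto simp: RH_def)

lemma RH_prim: "(x, y) \<in> RH n \<Longrightarrow> primitive n x \<longleftrightarrow> primitive n y"
  unfolding primitive_def using RH_per by metis

lemma RH_mem: "(x, y) \<in> RH n \<longleftrightarrow> x \<in> sts_H2 n \<and> y \<in> sts_H2 n \<and> (\<exists>\<sigma>. isoP n \<sigma> (fst x) (snd x) (fst y) (snd y))"
  using RH_iff isoP_H2 by (metis prod.collapse)

context cellp begin

lemma card_Ct: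
  assumes dv: "(a * c) dvd n"
  shows "card {C \<in> E n. \<forall>p\<in>C. period_lattice n (fst p) (snd p) = range (Mlin a b c)} = card (Ep (n div (a * c)))"
proof -
  define m where "m = n div (a * c)"
  have nm: "n = m * (a * c)" using dv unfolding m_def by simp
  define A where "A = {T \<in> sts_H2 m. primitive m T}"
  define RA where "RA = RH m \<inter> (A \<times> A)"
  define B where "B = {S \<in> sts_H2 n. period_lattice n (fst S) (snd S) = range (Mlin a b c)}"
  define RB where "RB = RH n \<inter> (B \<times> B)"
  have invA: "\<And>x y. (x, y) \<in> RH m \<Longrightarrow> primitive m x = primitive m y" using RH_prim by blast
  have invB: "\<And>x y. (x, y) \<in> RH n \<Longrightarrow> (period_lattice n (fst x) (snd x) = range (Mlin a b c)) =
      (period_lattice n (fst y) (snd y) = range (Mlin a b c))"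
    by (drule RH_per) simp
  have EpA: "Ep m = A // RA" unfolding Ep_def E_RH A_def RA_def
    by (rule quot_restrict(1)[OF equiv_RH invA])
  have eA: "equiv A RA" unfolding A_def RA_def
    by (rule quot_restrict(2)[OF equiv_RH invA])
  have CtB: "{C \<in> E n. \<forall>p\<in>C. period_lattice n (fst p) (snd p) = range (Mlin a b c)} = B // RB"
    unfolding E_RH B_def RB_def
    by (rule quot_restrict(1)[OF equiv_RH invB])
  have eB: "equiv B RB" unfolding B_def RB_def
    by (rule quot_restrict(2)[OF equiv_RH invB])
  define f where "f T = (hF m (fst T), vF m (fst T) (snd T))" for T
  have perms: "fst T permutes {..<m}" "snd T permutes {..<m}" if "T \<in> sts_H2 m" for T
    using that by (auto simp: sts_H2_def sts_def)
  have fB: "f T \<in> B" if T: "T \<in> A" for T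
  proof -
    obtain H V where HV: "T = (H, V)" by (cases T)
    have TA: "(H, V) \<in> sts_H2 m" "primitive m (H, V)" using T HV A_def by auto
    interpret C: cellT a b c m H V using perms[OF TA(1)] HV by unfold_locales auto
    show ?thesis unfolding f_def B_def HV using C.H2_FT C.prim_FT TA nm by simp
  qed
  show ?thesis unfolding CtB m_def[symmetric] EpA
  proof (rule card_quot_eq[OF eA eB, of f, symmetric])
    show "\<And>x. x \<in> A \<Longrightarrow> f x \<in> B" by (rule fB)
    show "(f x, f y) \<in> RB" if xy: "(x, y) \<in> RA" for x y
    proof -
      have xyA: "x \<in> A" "y \<in> A" using xy RA_def by auto
      obtain \<tau> where iso: "isoP m \<tau> (fst x) (snd x) (fst y) (snd y)" using xy RA_def RH_iff by blast
      have px: "fst x permutes {..<m}" "snd x permutes {..<m}" "fst y permutes {..<m}" "snd y permutes {..<m}"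
        using perms xyA A_def by auto
      interpret C2: cellT2 a b c m "fst x" "snd x" "fst y" "snd y"
        using px by unfold_locales auto
      obtain \<sigma> where "isoP C2.A.N \<sigma> C2.A.hh C2.A.vv C2.B.hh C2.B.vv" using C2.respect[OF iso] by blast
      then show ?thesis unfolding RB_def using fB xyA RH_mem B_def nm unfolding f_def by auto
    qed
    show "(x, y) \<in> RA" if xy: "x \<in> A" "y \<in> A" "(f x, f y) \<in> RB" for x y
    proof -
      have px: "fst x permutes {..<m}" "snd x permutes {..<m}" "fst y permutes {..<m}" "snd y permutes {..<m}"
        using perms xy A_def by auto
      interpret C2: cellT2 a b c m "fst x" "snd x" "fst y" "snd y"
        using px by unfold_locales auto
      obtain \<sigma> where "isoP n \<sigma> (fst (f x)) (snd (f x)) (fst (f y)) (snd (f y))"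
        using xy(3) RB_def RH_iff by blast
      then have "isoP C2.A.N \<sigma> C2.A.hh C2.A.vv C2.B.hh C2.B.vv" unfolding f_def nm by simp
      moreover have "(fst x, snd x) \<in> sts_H2 m" using xy A_def by simp
      ultimately obtain \<tau> where "isoP m \<tau> (fst x) (snd x) (fst y) (snd y)" using C2.reflect by blast
      then show ?thesis unfolding RA_def using xy RH_mem A_def by auto
    qed
    show "\<exists>x\<in>A. (f x, y) \<in> RB" if y: "y \<in> B" for y
    proof -
      obtain h v where hv: "y = (h, v)" by (cases y)
      have yS: "(h, v) \<in> sts_H2 n" "period_lattice n h v = range (Mlin a b c)" using y hv B_def by auto
      interpret S: surjS a b c n h v using yS surf_sts[of h v n] by unfold_locales (auto simp: sts_H2_def surf_def sts_def)
      obtain \<sigma> where iso: "isoP n \<sigma> (hF S.mJ S.HH) (vF S.mJ S.HH S.VV) h v" using S.surj_main by blast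
      have mm: "S.mJ = m" using S.n_mJ nm a_pos c_pos by simp
      interpret C: cellT a b c m S.HH S.VV using S.HH_perm S.VV_perm mm by unfold_locales auto
      have iso': "isoP n \<sigma> C.hh C.vv h v" using iso mm by simp
      have FH2: "(C.hh, C.vv) \<in> sts_H2 n" using isoP_H2[OF isoP_sym[OF iso'] yS(1)] .
      have TH2: "(S.HH, S.VV) \<in> sts_H2 m" using C.H2_FT FH2 nm by simp
      have "period_lattice n C.hh C.vv = range (Mlin a b c)" using isoP_per[OF iso'] yS(2) by simp
      then have prim: "primitive m (S.HH, S.VV)" using C.prim_FT nm by simp
      have TA: "(S.HH, S.VV) \<in> A" using TH2 prim A_def by simp
      have "(f (S.HH, S.VV), y) \<in> RB" unfolding RB_def using fB[OF TA] y RH_mem iso' hv FH2 yS(1) unfolding f_def by auto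
      then show ?thesis using TA by blast
    qed
  qed
qed

end

definition Trip :: "nat \<Rightarrow> (nat \<times> nat \<times> nat) set" where
  "Trip n = {(a, b, c). 0 < a \<and> 0 < c \<and> b < a \<and> (a * c) dvd n}"

definition Ct :: "nat \<Rightarrow> nat \<times> nat \<times> nat \<Rightarrow> ((nat \<Rightarrow> nat) \<times> (nat \<Rightarrow> nat)) set set" where
  "Ct n t = {C \<in> E n. \<forall>p\<in>C. period_lattice n (fst p) (snd p) = range (Mlin (fst t) (fst (snd t)) (snd (snd t)))}"

lemma Trip_fin: "0 < n \<Longrightarrow> finite (Trip n)"
proof -
  assume n: "0 < n"
  have "Trip n \<subseteq> {..n} \<times> {..n} \<times> {..n}"
  proof
    fix t assume "t \<in> Trip n"
    then obtain a b c where t: "t = (a, b, c)" "0 < a" "0 < c" "b < a" "(a * c) dvd n" unfolding Trip_def by auto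
    then have "a * c \<le> n" using n by (simp add: dvd_imp_le)
    moreover have h1: "a * 1 \<le> a * c" by (rule mult_le_mono2) (use t(3) in simp)
    moreover have h2: "1 * c \<le> a * c" by (rule mult_le_mono1) (use t(2) in simp)
    ultimately have "a \<le> n" "c \<le> n" by linarith+
    then show "t \<in> {..n} \<times> {..n} \<times> {..n}" using t by auto
  qed
  then show ?thesis by (rule finite_subset) auto
qed

lemma E_decomp:
  assumes n: "0 < n"
  shows "card (E n) = (\<Sum>t\<in>Trip n. card (Ct n t))"
proof -
  have EU: "E n = \<Union> (Ct n ` Trip n)"
  proof
    show "\<Union> (Ct n ` Trip n) \<subseteq> E n" unfolding Ct_def by auto
    show "E n \<subseteq> \<Union> (Ct n ` Trip n)"
    proof
      fix C assume "C \<in> E n"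
      then obtain S where S: "S \<in> sts_H2 n" "C = RH n `` {S}" unfolding E_RH by (auto elim!: quotientE)
      obtain h v where hv: "S = (h, v)" by (cases S)
      obtain a b c where abc: "0 < a" "0 < c" "b < a" "period_lattice n h v = range (Mlin a b c)"
        using per_hnf[of h v n] S hv n by blast
      interpret SS: surjS a b c n h v using abc S hv surf_sts[of h v n] by unfold_locales (auto simp: sts_H2_def surf_def sts_def)
      have "(a * c) dvd n" using SS.n_mJ by (metis dvd_triv_right)
      then have tr: "(a, b, c) \<in> Trip n" using abc unfolding Trip_def by simp
      have "\<forall>p\<in>C. period_lattice n (fst p) (snd p) = range (Mlin a b c)"
        using S RH_per abc hv by fastforce
      then have "C \<in> Ct n (a, b, c)" unfolding Ct_def using \<open>C \<in> E n\<close> by simp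
      then show "C \<in> \<Union> (Ct n ` Trip n)" using tr by blast
    qed
  qed
  have disj: "\<forall>i\<in>Trip n. \<forall>j\<in>Trip n. i \<noteq> j \<longrightarrow> Ct n i \<inter> Ct n j = {}"
  proof (intro ballI impI)
    fix i j assume ij: "i \<in> Trip n" "j \<in> Trip n" "i \<noteq> j"
    show "Ct n i \<inter> Ct n j = {}"
    proof (rule ccontr)
      assume "Ct n i \<inter> Ct n j \<noteq> {}"
      then obtain C where C: "C \<in> Ct n i" "C \<in> Ct n j" by blast
      then have "C \<in> E n" unfolding Ct_def by simp
      then obtain S where S: "S \<in> sts_H2 n" "C = RH n `` {S}" unfolding E_RH by (auto elim!: quotientE)
      then have "S \<in> C" using equiv_RH by (simp add: equiv_def refl_on_def)
      then have "period_lattice n (fst S) (snd S) = range (Mlin (fst i) (fst (snd i)) (snd (snd i)))"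
        "period_lattice n (fst S) (snd S) = range (Mlin (fst j) (fst (snd j)) (snd (snd j)))"
        using C unfolding Ct_def by blast+
      then have "range (Mlin (fst i) (fst (snd i)) (snd (snd i))) = range (Mlin (fst j) (fst (snd j)) (snd (snd j)))"
        by simp
      then have "i = j" using hnf_unique ij unfolding Trip_def by (auto simp: prod_eq_iff)
      then show False using ij by simp
    qed
  qed
  have "card (E n) = card (\<Union> (Ct n ` Trip n))" using EU by simp
  also have "\<dots> = (\<Sum>t\<in>Trip n. card (Ct n t))"
    by (rule card_UN_disjoint[OF Trip_fin[OF n] _ disj]) (auto intro: finite_subset[OF _ E_fin] simp: Ct_def)
  finally show ?thesis .
qed

lemma count_trip:
  assumes d: "0 < d"
  shows "card {t. t \<in> Trip n \<and> fst t * snd (snd t) = d} = (if d dvd n then sigma1 d else 0)"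
proof (cases "d dvd n")
  case False
  have e: "{t. t \<in> Trip n \<and> fst t * snd (snd t) = d} = {}" using False unfolding Trip_def by auto
  show ?thesis unfolding e using False by simp
next
  case True
  have e: "{t. t \<in> Trip n \<and> fst t * snd (snd t) = d} = (\<lambda>(a, b). (a, b, d div a)) ` (SIGMA a:{a. a dvd d}. {..<a})"
  proof
    show "{t. t \<in> Trip n \<and> fst t * snd (snd t) = d} \<subseteq> (\<lambda>(a, b). (a, b, d div a)) ` (SIGMA a:{a. a dvd d}. {..<a})"
    proof
      fix t assume "t \<in> {t. t \<in> Trip n \<and> fst t * snd (snd t) = d}"
      then obtain a b c where t: "t = (a, b, c)" "0 < a" "0 < c" "b < a" "a * c = d" unfolding Trip_def by auto
      then have "c = d div a" by auto
      moreover have "a dvd d" using t(5) by (metis dvd_triv_left)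
      ultimately show "t \<in> (\<lambda>(a, b). (a, b, d div a)) ` (SIGMA a:{a. a dvd d}. {..<a})"
        using t by (intro image_eqI[of _ _ "(a, b)"]) auto
    qed
    show "(\<lambda>(a, b). (a, b, d div a)) ` (SIGMA a:{a. a dvd d}. {..<a}) \<subseteq> {t. t \<in> Trip n \<and> fst t * snd (snd t) = d}"
    proof
      fix t assume "t \<in> (\<lambda>(a, b). (a, b, d div a)) ` (SIGMA a:{a. a dvd d}. {..<a})"
      then obtain a b where t: "t = (a, b, d div a)" "a dvd d" "b < a" by auto
      then have "0 < a" "a * (d div a) = d" using d by auto
      moreover have "0 < d div a" using calculation d by (metis mult_0_right neq0_conv)
      ultimately show "t \<in> {t. t \<in> Trip n \<and> fst t * snd (snd t) = d}"
        using t True unfolding Trip_def by auto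
    qed
  qed
  have inj: "inj_on (\<lambda>(a, b). (a, b, d div a)) (SIGMA a:{a. a dvd d}. {..<a})"
    by (rule inj_onI) auto
  have fin: "finite {a. a dvd d}" using d by simp
  have "card {t. t \<in> Trip n \<and> fst t * snd (snd t) = d} = card (SIGMA a:{a. a dvd d}. {..<a})"
    unfolding e using card_image[OF inj] by simp
  also have "\<dots> = (\<Sum>a\<in>{a. a dvd d}. card {..<a})" by (rule card_SigmaI[OF fin]) simp
  also have "\<dots> = (\<Sum>a\<in>{a. a dvd d}. a)" by simp
  finally show ?thesis using True unfolding sigma1_def by simp
qed

theorem main_count:
  fixes n :: nat
  assumes n: "n > 0"
  shows "card (E n) = (\<Sum>d\<in>{d. d dvd n}. sigma1 d * card (Ep (n div d)))"
proof -
  have ct: "card (Ct n t) = card (Ep (n div (fst t * snd (snd t))))" if "t \<in> Trip n" for t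
  proof -
    obtain a b c where tt: "t = (a, b, c)" by (cases t)
    have t: "0 < a" "0 < c" "b < a" "(a * c) dvd n" using that tt unfolding Trip_def by auto
    interpret cellp a b c using t by unfold_locales auto
    show ?thesis unfolding Ct_def tt using card_Ct[OF t(4)] by simp
  qed
  have "card (E n) = (\<Sum>t\<in>Trip n. card (Ep (n div (fst t * snd (snd t)))))"
    using E_decomp[OF n] ct by simp
  also have "\<dots> = (\<Sum>d\<in>{d. d dvd n}. \<Sum>t\<in>{t. t \<in> Trip n \<and> fst t * snd (snd t) = d}. card (Ep (n div (fst t * snd (snd t)))))"
  proof (rule sum.group[symmetric])
    show "finite (Trip n)" using Trip_fin[OF n] .
    show "finite {d. d dvd n}" using n by simp
    show "(\<lambda>t. fst t * snd (snd t)) ` Trip n \<subseteq> {d. d dvd n}" unfolding Trip_def by auto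
  qed
  also have "\<dots> = (\<Sum>d\<in>{d. d dvd n}. sigma1 d * card (Ep (n div d)))"
  proof (rule sum.cong)
    fix d assume "d \<in> {d. d dvd n}"
    then have dd: "d dvd n" "0 < d" using n by (auto intro: Nat.gr0I)
    have "(\<Sum>t\<in>{t. t \<in> Trip n \<and> fst t * snd (snd t) = d}. card (Ep (n div (fst t * snd (snd t)))))
        = (\<Sum>t\<in>{t. t \<in> Trip n \<and> fst t * snd (snd t) = d}. card (Ep (n div d)))" by (rule sum.cong) auto
    also have "\<dots> = sigma1 d * card (Ep (n div d))" using count_trip[OF dd(2), of n] dd by simp
    finally show "(\<Sum>t\<in>{t. t \<in> Trip n \<and> fst t * snd (snd t) = d}. card (Ep (n div (fst t * snd (snd t))))) = sigma1 d * card (Ep (n div d))" .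
  qed simp
  finally show ?thesis .
qed

theorem mainTheorem10:
  fixes n :: nat
  assumes "n > 0"
  shows "card (E n) = (\<Sum>d\<in>{d. d dvd n}. sigma1 d * card (Ep (n div d)))"
  using main_count[OF assms] .

end
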